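(* In the setting described in the context (in particular $b\ge1000\log^2n$), with $\overline\mu=\overline x\,\overline s$ and $\overline\mu^{\mathrm{new}}=(\overline x+\widehat\delta_x)(\overline s+\widehat\delta_s)$: 1. $\|\mathbb E[\overline\mu^{-1}(\overline\mu^{\mathrm{new}}-\overline\mu-\overline\delta_t-\widetilde\delta_\Phi)]\|_2\le9\epsilon_{\mathrm{mp}}\epsilon+4\epsilon^2+2\epsilon^2\sqrt n/b$; 2. $\operatorname{Var}[\overline\mu_i^{-1}\overline\mu_i^{\mathrm{new}}]\le16\epsilon_{\mathrm{mp}}^2\epsilon^2/b+320\epsilon^4/b$ holds with probability at least $1-1/\operatorname{poly}(n)$ for all $i\in[n]$; 3. $\|\overline\mu^{-1}(\overline\mu^{\mathrm{new}}-\overline\mu)\|_\infty\le6\epsilon$ with probability at least $1-1/\operatorname{poly}(n)$; 4. $\|\mathbb E[\overline\mu^{-1}(\overline\mu^{\mathrm{new}}-\overline\mu)]\|_2\le6\epsilon+2\epsilon^2\sqrt n/b$.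
   Context: Let $n\ge2$ and $A\in\mathbb{R}^{d\times n}$ have full row rank $d\le n$. Products, quotients, square roots and inverses of vectors are coordinatewise; for $u\in\mathbb{R}^n$, $U=\operatorname{diag}(u)$. For $u\in\mathbb{R}^n_{>0}$ and $v\in\mathbb{R}^n_{>0}$ (or a scalar $v>0$, identified with $v\mathbf 1$), $u\approx_\gamma v$ means $(1-\gamma)v_i\le u_i\le(1+\gamma)v_i$ for all $i$. Parameters: $\epsilon,\epsilon_{\mathrm{mp}}\in(0,10^{-4})$, $\lambda>\log n$, $b\ge1000\log^2n$; $\Phi_\lambda(r)=\sum_i\cosh(\lambda r_i)$, $\nabla\Phi_\lambda(r)=(\lambda\sinh(\lambda r_i))_i$. Let $t>0$, $t^{\mathrm{new}}=(1-\frac{\epsilon}{3\sqrt n})t$. Let $\overline x,\overline s\in\mathbb{R}^n_{>0}$, $\overline w=\overline x/\overline s$, $\overline\mu=\overline x\,\overline s$, $\overline\delta_t=(\frac{t^{\mathrm{new}}}{t}-1)\overline\mu$. Let $\widetilde w,\widetilde\mu\in\mathbb{R}^n_{>0}$ satisfy $\widetilde\mu\approx_{\epsilon_{\mathrm{mp}}}\overline\mu$, $\widetilde w\approx_{\epsilon_{\mathrm{mp}}}\overline w$, $\overline\mu\approx_{0.1}t$. Define $\widetilde x=\sqrt{\widetilde w\widetilde\mu}$, $\widetilde s=\sqrt{\widetilde\mu/\widetilde w}$, $\widetilde P=\widetilde W^{1/2}A^\top(A\widetilde WA^\top)^{-1}A\widetilde W^{1/2}$, $\widetilde\delta_t=(\frac{t^{\mathrm{new}}}{t}-1)\widetilde\mu$,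 $\widetilde\delta_\Phi=-\frac\epsilon2t^{\mathrm{new}}\frac{\nabla\Phi_\lambda(\widetilde\mu/t-1)}{\|\nabla\Phi_\lambda(\widetilde\mu/t-1)\|_2}$ (gradient assumed nonzero), $\widetilde\delta_\mu=\widetilde\delta_t+\widetilde\delta_\Phi$. Let $R\in\mathbb{R}^{b\times n}$ be a random subsampled randomized Hadamard transform; for every fixed $h\in\mathbb{R}^n$, every $i$ and $\delta\in(0,1)$: $\mathbb E[R^\top Rh]=h$, $\mathbb E[(R^\top Rh)_i^2]\le h_i^2+\frac1b\|h\|_2^2$, $\Pr[|(R^\top Rh)_i-h_i|>\|h\|_2\log(n/\delta)/\sqrt b]\le\delta$. Define $\widehat\delta_x=\widetilde X(\widetilde X\widetilde S)^{-1/2}(I-R^\top R\widetilde P)(\widetilde X\widetilde S)^{-1/2}\widetilde\delta_\mu$ and $\widehat\delta_s=\widetilde S(\widetilde X\widetilde S)^{-1/2}R^\top R\widetilde P(\widetilde X\widetilde S)^{-1/2}\widetilde\delta_\mu$. Expectations, variances and probabilities are over $R$. *)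

theory Defs
  imports "HOL-Probability.Probability" "Jordan_Normal_Form.DL_Rank"
    "Jordan_Normal_Form.Gauss_Jordan_Elimination"
begin

no_notation vec_nth (infixl "$" 90)

definition vmul :: "real vec \<Rightarrow> real vec \<Rightarrow> real vec" where
  "vmul u v = Matrix.vec (dim_vec u) (\<lambda>i. u $ i * v $ i)"

definition vdivide :: "real vec \<Rightarrow> real vec \<Rightarrow> real vec" where
  "vdivide u v = Matrix.vec (dim_vec u) (\<lambda>i. u $ i / v $ i)"

definition vsqrt :: "real vec \<Rightarrow> real vec" where
  "vsqrt u = Matrix.vec (dim_vec u) (\<lambda>i. sqrt (u $ i))"

definition vinv :: "real vec \<Rightarrow> real vec" where
  "vinv u = Matrix.vec (dim_vec u) (\<lambda>i. 1 / u $ i)"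

definition vdiag :: "real vec \<Rightarrow> real mat" where
  "vdiag u = mat_diag (dim_vec u) (\<lambda>i. u $ i)"

definition norm2 :: "real vec \<Rightarrow> real" where
  "norm2 u = sqrt (\<Sum>i<dim_vec u. (u $ i)\<^sup>2)"

definition approx_vec :: "real vec \<Rightarrow> real \<Rightarrow> real vec \<Rightarrow> bool" where
  "approx_vec u \<gamma> v \<longleftrightarrow> dim_vec u = dim_vec v \<and>
     (\<forall>i<dim_vec v. (1 - \<gamma>) * v $ i \<le> u $ i \<and> u $ i \<le> (1 + \<gamma>) * v $ i)"

definition approx_scal :: "real vec \<Rightarrow> real \<Rightarrow> real \<Rightarrow> bool" where
  "approx_scal u \<gamma> c \<longleftrightarrow> (\<forall>i<dim_vec u. (1 - \<gamma>) * c \<le> u $ i \<and> u $ i \<le> (1 + \<gamma>) * c)"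

definition pos_vec :: "real vec \<Rightarrow> bool" where
  "pos_vec u \<longleftrightarrow> (\<forall>i<dim_vec u. 0 < u $ i)"

text \<open>Gradient of \<Phi>_\<lambda>(r) = \<Sum>_i cosh(\<lambda> r_i).\<close>
definition gradPhi :: "real \<Rightarrow> real vec \<Rightarrow> real vec" where
  "gradPhi lam r = Matrix.vec (dim_vec r) (\<lambda>i. lam * sinh (lam * r $ i))"

definition full_row_rank :: "nat \<Rightarrow> nat \<Rightarrow> real mat \<Rightarrow> bool" where
  "full_row_rank d n A \<longleftrightarrow> A \<in> carrier_mat d n \<and> vec_space.rank d A = d"

definition minv :: "real mat \<Rightarrow> real mat" where
  "minv M = the (mat_inverse M)"

definition projP :: "real mat \<Rightarrow> real vec \<Rightarrow> real mat" where
  "projP A w = vdiag (vsqrt w) * transpose_mat A * minv (A * vdiag w * transpose_mat A)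
               * A * vdiag (vsqrt w)"

definition tnew :: "nat \<Rightarrow> real \<Rightarrow> real \<Rightarrow> real" where
  "tnew n eps t = (1 - eps / (3 * sqrt (real n))) * t"

definition delta_t :: "nat \<Rightarrow> real \<Rightarrow> real \<Rightarrow> real vec \<Rightarrow> real vec" where
  "delta_t n eps t mu = (tnew n eps t / t - 1) \<cdot>\<^sub>v mu"

definition delta_Phi :: "nat \<Rightarrow> real \<Rightarrow> real \<Rightarrow> real \<Rightarrow> real vec \<Rightarrow> real vec" where
  "delta_Phi n eps lam t mu =
     (let g = gradPhi lam (Matrix.vec (dim_vec mu) (\<lambda>i. mu $ i / t - 1))
      in (- (eps / 2) * tnew n eps t / norm2 g) \<cdot>\<^sub>v g)"

definition xtil :: "real vec \<Rightarrow> real vec \<Rightarrow> real vec" where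
  "xtil w mu = vsqrt (vmul w mu)"

definition stil :: "real vec \<Rightarrow> real vec \<Rightarrow> real vec" where
  "stil w mu = vsqrt (vdivide mu w)"

definition delta_mu :: "nat \<Rightarrow> real \<Rightarrow> real \<Rightarrow> real \<Rightarrow> real vec \<Rightarrow> real vec" where
  "delta_mu n eps lam t mu = delta_t n eps t mu + delta_Phi n eps lam t mu"

definition hat_dx :: "nat \<Rightarrow> real \<Rightarrow> real \<Rightarrow> real \<Rightarrow> real mat \<Rightarrow> real vec \<Rightarrow> real vec
    \<Rightarrow> real mat \<Rightarrow> real vec" where
  "hat_dx n eps lam t A w mu R =
     (let X = vdiag (xtil w mu); S = vdiag (stil w mu);
          XSh = vdiag (vinv (vsqrt (vmul (xtil w mu) (stil w mu))))
      in X * XSh * (1\<^sub>m n - transpose_mat R * R * projP A w) * XSh *\<^sub>v delta_mu n eps lam t mu)"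

definition hat_ds :: "nat \<Rightarrow> real \<Rightarrow> real \<Rightarrow> real \<Rightarrow> real mat \<Rightarrow> real vec \<Rightarrow> real vec
    \<Rightarrow> real mat \<Rightarrow> real vec" where
  "hat_ds n eps lam t A w mu R =
     (let S = vdiag (stil w mu);
          XSh = vdiag (vinv (vsqrt (vmul (xtil w mu) (stil w mu))))
      in S * XSh * transpose_mat R * R * projP A w * XSh *\<^sub>v delta_mu n eps lam t mu)"

definition mu_new :: "nat \<Rightarrow> real \<Rightarrow> real \<Rightarrow> real \<Rightarrow> real mat \<Rightarrow> real vec \<Rightarrow> real vec
    \<Rightarrow> real vec \<Rightarrow> real vec \<Rightarrow> real mat \<Rightarrow> real vec" where
  "mu_new n eps lam t A w mu xb sb R =
     vmul (xb + hat_dx n eps lam t A w mu R) (sb + hat_ds n eps lam t A w mu R)"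

text \<open>Hypotheses on the random sketch R : \<Omega> \<rightarrow> R^{b x n} (SRHT), as listed in the context.\<close>
definition sketch_hyps :: "'w measure \<Rightarrow> nat \<Rightarrow> nat \<Rightarrow> ('w \<Rightarrow> real mat) \<Rightarrow> bool" where
  "sketch_hyps M b n R \<longleftrightarrow>
     prob_space M \<and>
     (\<forall>\<omega>\<in>space M. R \<omega> \<in> carrier_mat b n) \<and>
     (\<forall>i j. (\<lambda>\<omega>. R \<omega> $$ (i, j)) \<in> borel_measurable M) \<and>
     (\<forall>h \<in> carrier_vec n. \<forall>i<n.
        integrable M (\<lambda>\<omega>. (transpose_mat (R \<omega>) * R \<omega> *\<^sub>v h) $ i) \<and>
        integral\<^sup>L M (\<lambda>\<omega>. (transpose_mat (R \<omega>) * R \<omega> *\<^sub>v h) $ i) = h $ i \<and>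
        integrable M (\<lambda>\<omega>. ((transpose_mat (R \<omega>) * R \<omega> *\<^sub>v h) $ i)\<^sup>2) \<and>
        integral\<^sup>L M (\<lambda>\<omega>. ((transpose_mat (R \<omega>) * R \<omega> *\<^sub>v h) $ i)\<^sup>2)
          \<le> (h $ i)\<^sup>2 + (norm2 h)\<^sup>2 / real b \<and>
        (\<forall>\<delta>. 0 < \<delta> \<and> \<delta> < 1 \<longrightarrow>
          measure M {\<omega> \<in> space M. \<bar>(transpose_mat (R \<omega>) * R \<omega> *\<^sub>v h) $ i - h $ i\<bar>
              > norm2 h * ln (real n / \<delta>) / sqrt (real b)} \<le> \<delta>))"

end

theory Submission
  imports Defs
begin

lemma diag_mult_vec:
  assumes "x \<in> carrier_vec n"
  shows "mat_diag n f *\<^sub>v x = Matrix.vec n (\<lambda>i. f i * x $ i)"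
proof (rule eq_vecI)
  fix i assume i: "i < dim_vec (Matrix.vec n (\<lambda>i. f i * x $ i))"
  hence i': "i < n" by simp
  have "(mat_diag n f *\<^sub>v x) $ i = (\<Sum>j<n. (if i = j then f j else 0) * x $ j)"
    using i' assms by (simp add: mat_diag_def scalar_prod_def row_def atLeast0LessThan)
  also have "\<dots> = f i * x $ i"
    by (simp add: if_distrib[where f="\<lambda>t. t * _"] sum.delta i' cong: if_cong)
  finally show "(mat_diag n f *\<^sub>v x) $ i = Matrix.vec n (\<lambda>i. f i * x $ i) $ i" using i' by simp
qed (simp add: mat_diag_def)

lemma vdiag_mult_vec:
  assumes "x \<in> carrier_vec (dim_vec u)"
  shows "vdiag u *\<^sub>v x = Matrix.vec (dim_vec u) (\<lambda>i. u $ i * x $ i)"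
  unfolding vdiag_def using diag_mult_vec[OF assms] .

lemma vdiag_carrier[simp]: "vdiag u \<in> carrier_mat (dim_vec u) (dim_vec u)"
  unfolding vdiag_def by simp

lemma vdiag_carrier': "dim_vec u = n \<Longrightarrow> vdiag u \<in> carrier_mat n n"
  using vdiag_carrier by metis

lemma full_row_rank_inj:
  assumes fr: "full_row_rank d n A" and x: "x \<in> carrier_vec d"
    and z: "transpose_mat A *\<^sub>v x = 0\<^sub>v n"
  shows "x = 0\<^sub>v d"
proof -
  interpret vs: vec_space "TYPE(real)" d .
  have A: "A \<in> carrier_mat d n" and rk: "vs.rank A = d" using fr unfolding full_row_rank_def by auto
  obtain S where Sfin: "finite S" and Smax: "maximal S (\<lambda>T. T \<subseteq> set (cols A) \<and> vs.lin_indpt T)"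
    using maximal_exists[of "(\<lambda>T. T \<subseteq> set (cols A) \<and> vs.lin_indpt T)" "card (set (cols A))" "{}"]
    by (meson List.finite_set card_mono empty_iff empty_subsetI vs.finite_lin_indpt2 rev_finite_subset)
  have cardS: "card S = d" using vs.rank_card_indpt[OF A Smax] rk by simp
  have SA: "S \<subseteq> set (cols A)" and Sli: "vs.lin_indpt S" using Smax unfolding maximal_def by auto
  obtain L where L: "set L = S" "distinct L" using finite_distinct_list[OF Sfin] by blast
  have lenL: "length L = d" using L cardS distinct_card by fastforce
  have Lcar: "set L \<subseteq> carrier_vec d" using L SA cols_dim A by blast
  define C where "C = mat_of_cols d L"
  have C: "C \<in> carrier_mat d d" unfolding C_def using lenL mat_of_cols_carrier(1) by metis
  have colsC: "cols C = L" unfolding C_def using Lcar by simp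
  have "vs.rank C = d" using vs.lin_indpt_full_rank[OF C] colsC L Sli by simp
  hence "Determinant.det C \<noteq> 0" using vs.det_rank_iff[OF C] by simp
  hence dT: "Determinant.det (transpose_mat C) \<noteq> 0" using det_transpose[OF C] by simp
  have CT: "transpose_mat C \<in> carrier_mat d d" using C by simp
  have "transpose_mat C *\<^sub>v x = 0\<^sub>v d"
  proof (rule eq_vecI)
    fix j assume "j < dim_vec (0\<^sub>v d :: real vec)"
    hence j: "j < d" by simp
    have "L ! j \<in> set (cols A)" using L SA j lenL nth_mem by blast
    then obtain k where k: "k < n" "L ! j = col A k" using A
      by (metis cols_length cols_nth in_set_conv_nth carrier_matD(2))
    have "(transpose_mat A *\<^sub>v x) $ k = col A k \<bullet> x" using A k by simp
    hence "col A k \<bullet> x = 0" using z k by simp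
    moreover have "(transpose_mat C *\<^sub>v x) $ j = col C j \<bullet> x" using C j by simp
    moreover have "col C j = L ! j" using colsC C j by (metis cols_nth carrier_matD(2))
    ultimately show "(transpose_mat C *\<^sub>v x) $ j = (0\<^sub>v d :: real vec) $ j" using k j by simp
  qed (use CT in simp)
  thus ?thesis using det_0_iff_vec_prod_zero_field[OF CT] dT x by blast
qed

lemma norm2_L2: "norm2 u = L2_set (\<lambda>i. u $ i) {..<dim_vec u}"
  by (simp add: norm2_def L2_set_def)

lemma sprod_self: "(x::real vec) \<bullet> x = (norm2 x)\<^sup>2"
  by (simp add: norm2_def scalar_prod_def power2_eq_square atLeast0LessThan sum_nonneg)

lemma sprod_CS: assumes "dim_vec (y::real vec) = dim_vec x"
  shows "x \<bullet> y \<le> norm2 x * norm2 y"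
proof -
  have "x \<bullet> y = (\<Sum>i<dim_vec x. x $ i * y $ i)" using assms by (simp add: scalar_prod_def atLeast0LessThan)
  also have "\<dots> \<le> (\<Sum>i<dim_vec x. \<bar>x $ i\<bar> * \<bar>y $ i\<bar>)"
    by (intro sum_mono) (metis abs_ge_self abs_mult)
  also have "\<dots> \<le> L2_set (\<lambda>i. x $ i) {..<dim_vec x} * L2_set (\<lambda>i. y $ i) {..<dim_vec x}"
    by (rule L2_set_mult_ineq)
  finally show ?thesis using assms by (simp add: norm2_L2)
qed

lemma inverse_exists:
  assumes fr: "full_row_rank d n A" and w: "w \<in> carrier_vec n" and wp: "pos_vec w"
  shows "\<exists>B. mat_inverse (A * vdiag w * transpose_mat A) = Some B \<and>
     (A * vdiag w * transpose_mat A) * B = 1\<^sub>m d \<and> B \<in> carrier_mat d d"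
proof -
  have A: "A \<in> carrier_mat d n" using fr unfolding full_row_rank_def by auto
  have dw: "dim_vec w = n" using w by simp
  define G0 where "G0 = A * vdiag w * transpose_mat A"
  have Wc: "vdiag w \<in> carrier_mat n n" using dw by (rule vdiag_carrier')
  have AT: "transpose_mat A \<in> carrier_mat n d" using A by simp
  have G0: "G0 \<in> carrier_mat d d" unfolding G0_def
    using mult_carrier_mat[OF mult_carrier_mat[OF A Wc] AT] .
  have "Determinant.det G0 \<noteq> 0"
  proof
    assume "Determinant.det G0 = 0"
    then obtain x where x: "x \<in> carrier_vec d" "x \<noteq> 0\<^sub>v d" "G0 *\<^sub>v x = 0\<^sub>v d"
      using det_0_iff_vec_prod_zero_field[OF G0] by blast
    define z where "z = transpose_mat A *\<^sub>v x"
    have z: "z \<in> carrier_vec n" unfolding z_def using A x by simp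
    have Wz: "vdiag w *\<^sub>v z \<in> carrier_vec n" using mult_mat_vec_carrier[OF Wc z] .
    have "G0 *\<^sub>v x = (A * vdiag w) *\<^sub>v (transpose_mat A *\<^sub>v x)" unfolding G0_def
      by (rule assoc_mult_mat_vec[OF mult_carrier_mat[OF A Wc] AT x(1)])
    also have "\<dots> = A *\<^sub>v (vdiag w *\<^sub>v z)" unfolding z_def
      by (rule assoc_mult_mat_vec[OF A Wc]) (use z z_def in simp)
    finally have e: "A *\<^sub>v (vdiag w *\<^sub>v z) = 0\<^sub>v d" using x(3) by simp
    have "0 = x \<bullet> (A *\<^sub>v (vdiag w *\<^sub>v z))" using x(1) by (simp add: e)
    also have "\<dots> = z \<bullet> (vdiag w *\<^sub>v z)" 
      using transpose_vec_mult_scalar[OF A Wz x(1), folded z_def] by simp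
    also have "\<dots> = (\<Sum>i<n. w $ i * (z $ i)\<^sup>2)"
      using z dw by (simp add: vdiag_mult_vec scalar_prod_def atLeast0LessThan power2_eq_square mult.left_commute)
    finally have s0: "(\<Sum>i<n. w $ i * (z $ i)\<^sup>2) = 0" by simp
    have "\<forall>i\<in>{..<n}. w $ i * (z $ i)\<^sup>2 = 0"
      using sum_nonneg_eq_0_iff[of "{..<n}" "\<lambda>i. w $ i * (z $ i)\<^sup>2"] s0 wp dw
      unfolding pos_vec_def by (simp add: less_imp_le)
    hence "z = 0\<^sub>v n" using wp dw z unfolding pos_vec_def by (intro eq_vecI) (auto, metis lessThan_iff less_irrefl)
    hence "x = 0\<^sub>v d" using full_row_rank_inj[OF fr x(1)] unfolding z_def by simp
    thus False using x by simp
  qed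
  note U = det_non_zero_imp_unit[OF G0 this, of "()"]
  obtain B where "mat_inverse G0 = Some B"
    using mat_inverse(1)[OF G0, of "()"] U by (cases "mat_inverse G0") auto
  thus ?thesis using mat_inverse(2)[OF G0] unfolding G0_def by blast
qed

lemma dim_vsqrt[simp]: "dim_vec (vsqrt u) = dim_vec u" by (simp add: vsqrt_def)

lemma norm2_nonneg: "0 \<le> norm2 u" by (simp add: norm2_def sum_nonneg)

lemma proj_props:
  assumes fr: "full_row_rank d n A" and w: "w \<in> carrier_vec n" and wp: "pos_vec w"
  shows "projP A w \<in> carrier_mat n n"
    "\<And>v. v \<in> carrier_vec n \<Longrightarrow> norm2 (projP A w *\<^sub>v v) \<le> norm2 v"
proof -
  have A: "A \<in> carrier_mat d n" using fr unfolding full_row_rank_def by auto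
  have dw: "dim_vec w = n" using w by simp
  obtain B where B: "mat_inverse (A * vdiag w * transpose_mat A) = Some B"
     "(A * vdiag w * transpose_mat A) * B = 1\<^sub>m d" "B \<in> carrier_mat d d"
    using inverse_exists[OF fr w wp] by blast
  have mB: "minv (A * vdiag w * transpose_mat A) = B" using B(1) by (simp add: minv_def)
  define D where "D = vdiag (vsqrt w)"
  have Dc: "D \<in> carrier_mat n n" unfolding D_def by (rule vdiag_carrier') (simp add: dw)
  have Wc: "vdiag w \<in> carrier_mat n n" using dw by (rule vdiag_carrier')
  have AT: "transpose_mat A \<in> carrier_mat n d" using A by simp
  have P: "projP A w = D * transpose_mat A * B * A * D" unfolding projP_def mB D_def ..
  have c1: "D * transpose_mat A \<in> carrier_mat n d" using Dc AT by (rule mult_carrier_mat)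
  have c2: "D * transpose_mat A * B \<in> carrier_mat n d" using c1 B(3) by (rule mult_carrier_mat)
  have c3: "D * transpose_mat A * B * A \<in> carrier_mat n n" using c2 A by (rule mult_carrier_mat)
  show Pc: "projP A w \<in> carrier_mat n n" unfolding P using c3 Dc by (rule mult_carrier_mat)
  fix v :: "real vec" assume v: "v \<in> carrier_vec n"
  define Dv where "Dv = D *\<^sub>v v"
  define u where "u = A *\<^sub>v Dv"
  define g where "g = B *\<^sub>v u"
  define p where "p = transpose_mat A *\<^sub>v g"
  have Dv: "Dv \<in> carrier_vec n" unfolding Dv_def using Dc v by simp
  have u: "u \<in> carrier_vec d" unfolding u_def using A Dv by simp
  have g: "g \<in> carrier_vec d" unfolding g_def using B(3) u by simp
  have p: "p \<in> carrier_vec n" unfolding p_def using AT g by simp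
  have Pv: "projP A w *\<^sub>v v = D *\<^sub>v p"
  proof -
    have "projP A w *\<^sub>v v = (D * transpose_mat A * B * A) *\<^sub>v Dv"
      unfolding P Dv_def by (rule assoc_mult_mat_vec[OF c3 Dc v])
    also have "\<dots> = (D * transpose_mat A * B) *\<^sub>v u"
      unfolding u_def by (rule assoc_mult_mat_vec[OF c2 A Dv])
    also have "\<dots> = (D * transpose_mat A) *\<^sub>v g"
      unfolding g_def by (rule assoc_mult_mat_vec[OF c1 B(3) u])
    also have "\<dots> = D *\<^sub>v p"
      unfolding p_def by (rule assoc_mult_mat_vec[OF Dc AT g])
    finally show ?thesis .
  qed
  have Wp: "vdiag w *\<^sub>v p \<in> carrier_vec n" using Wc p by simp
  have G0c: "A * vdiag w * transpose_mat A \<in> carrier_mat d d"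
    using mult_carrier_mat[OF mult_carrier_mat[OF A Wc] AT] .
  have AWp: "A *\<^sub>v (vdiag w *\<^sub>v p) = u"
  proof -
    have "A *\<^sub>v (vdiag w *\<^sub>v p) = (A * vdiag w) *\<^sub>v p"
      by (rule assoc_mult_mat_vec[OF A Wc p, symmetric])
    also have "\<dots> = (A * vdiag w * transpose_mat A) *\<^sub>v g"
      unfolding p_def by (rule assoc_mult_mat_vec[OF mult_carrier_mat[OF A Wc] AT g, symmetric])
    also have "\<dots> = ((A * vdiag w * transpose_mat A) * B) *\<^sub>v u"
      unfolding g_def by (rule assoc_mult_mat_vec[OF G0c B(3) u, symmetric])
    also have "\<dots> = u" using B(2) u by simp
    finally show ?thesis .
  qed
  have e1: "(D *\<^sub>v p) \<bullet> (D *\<^sub>v p) = p \<bullet> (vdiag w *\<^sub>v p)"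
  proof -
    have "(D *\<^sub>v p) \<bullet> (D *\<^sub>v p) = (\<Sum>i<n. (sqrt (w $ i) * p $ i) * (sqrt (w $ i) * p $ i))"
      using p dw unfolding D_def
      by (simp add: vdiag_mult_vec scalar_prod_def atLeast0LessThan vsqrt_def)
    also have "\<dots> = (\<Sum>i<n. p $ i * (w $ i * p $ i))"
      using wp dw unfolding pos_vec_def
      by (intro sum.cong refl) (simp add: algebra_simps less_imp_le)
    also have "\<dots> = p \<bullet> (vdiag w *\<^sub>v p)"
      using p dw by (simp add: vdiag_mult_vec scalar_prod_def atLeast0LessThan)
    finally show ?thesis .
  qed
  have e2: "p \<bullet> (vdiag w *\<^sub>v p) = g \<bullet> u"
    unfolding p_def using transpose_vec_mult_scalar[OF A Wp g] AWp p_def by simp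
  have e3: "v \<bullet> (D *\<^sub>v p) = g \<bullet> u"
  proof -
    have "v \<bullet> (D *\<^sub>v p) = (\<Sum>i<n. v $ i * (sqrt (w $ i) * p $ i))"
      using p dw unfolding D_def by (simp add: vdiag_mult_vec scalar_prod_def atLeast0LessThan vsqrt_def)
    also have "\<dots> = (\<Sum>i<n. p $ i * (sqrt (w $ i) * v $ i))"
      by (intro sum.cong refl) (simp add: algebra_simps)
    also have "\<dots> = p \<bullet> Dv"
      using v dw unfolding D_def Dv_def by (simp add: vdiag_mult_vec scalar_prod_def atLeast0LessThan vsqrt_def)
    also have "\<dots> = g \<bullet> u" unfolding p_def u_def using transpose_vec_mult_scalar[OF A Dv g] by simp
    finally show ?thesis .
  qed
  have sq: "(norm2 (projP A w *\<^sub>v v))\<^sup>2 = v \<bullet> (projP A w *\<^sub>v v)"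
    unfolding sprod_self[symmetric] Pv using e1 e2 e3 by simp
  have dimPv: "dim_vec (projP A w *\<^sub>v v) = dim_vec v" using Pc v by simp
  have "(norm2 (projP A w *\<^sub>v v))\<^sup>2 \<le> norm2 v * norm2 (projP A w *\<^sub>v v)"
    unfolding sq by (rule sprod_CS[OF dimPv])
  thus "norm2 (projP A w *\<^sub>v v) \<le> norm2 v"
    using norm2_nonneg[of v] norm2_nonneg[of "projP A w *\<^sub>v v"]
    by (metis mult_right_le_imp_le power2_eq_square le_less not_le mult_zero_right mult_le_0_iff)
qed

lemma ln_le_half: assumes "(2::real) \<le> x" shows "ln x \<le> x / 2"
proof -
  have sx: "0 < sqrt x" using assms by simp
  have "ln (sqrt x) \<le> sqrt x - 1" using ln_le_minus_one[OF sx] .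
  moreover have "ln x = 2 * ln (sqrt x)" using assms
    by (metis ln_sqrt less_le_trans zero_less_numeral mult.commute nonzero_mult_div_cancel_left zero_neq_numeral le_less_trans less_eq_real_def times_divide_eq_right)
  moreover have "2 * sqrt x - 2 \<le> x / 2"
  proof -
    have "0 \<le> (sqrt x - 2)\<^sup>2" by simp
    moreover have "(sqrt x)\<^sup>2 = x" using assms by simp
    ultimately show ?thesis by (simp add: power2_eq_square algebra_simps)
  qed
  ultimately show ?thesis by linarith
qed

lemma poly_exp_bound: "(1 + real j)^4 * exp (- 3 * real j) \<le> 16 * exp (- real j)"
proof -
  have "1 + real j / 2 \<le> exp (real j / 2)" using exp_ge_add_one_self by blast
  hence "1 + real j \<le> 2 * exp (real j / 2)" by linarith
  hence "(1 + real j)^4 \<le> (2 * exp (real j / 2))^4" by (intro power_mono) auto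
  also have "\<dots> = 16 * exp (2 * real j)"
    by (simp add: power_mult_distrib exp_of_nat_mult[symmetric] power4_eq_xxxx exp_add[symmetric])
  finally have "(1 + real j)^4 * exp (- 3 * real j) \<le> 16 * exp (2 * real j) * exp (- 3 * real j)"
    by (intro mult_right_mono) auto
  also have "\<dots> = 16 * exp (- real j)" by (simp add: exp_add[symmetric])
  finally show ?thesis .
qed

lemma z4_bound:
  fixes Y :: "'w \<Rightarrow> real" and n :: nat
  assumes P: "prob_space M" and Ym[measurable]: "Y \<in> borel_measurable M"
    and int2: "integrable M (\<lambda>\<omega>. (Y \<omega> - m)\<^sup>2)"
    and var: "integral\<^sup>L M (\<lambda>\<omega>. (Y \<omega> - m)\<^sup>2) \<le> (H / s)\<^sup>2"
    and H: "0 \<le> H" and s: "0 < s" and n: "2 \<le> n"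
    and tail: "\<And>\<delta>. 0 < \<delta> \<Longrightarrow> \<delta> < 1 \<Longrightarrow>
        measure M {\<omega> \<in> space M. \<bar>Y \<omega> - m\<bar> > H * ln (real n / \<delta>) / s} \<le> \<delta>"
  shows "(\<integral>\<^sup>+\<omega>. ennreal ((Y \<omega> - m)^4) \<partial>M) \<le> ennreal (25400 * (H / s)^4 * (ln (real n))\<^sup>2)"
proof -
  interpret prob_space M by (rule P)
  define \<theta> where "\<theta> = H / s"
  define L where "L = ln (real n)"
  have th0: "0 \<le> \<theta>" unfolding \<theta>_def using H s by simp
  have nr: "2 \<le> real n" using n by simp
  have L23: "2/3 \<le> L" unfolding L_def using ln2_ge_two_thirds ln_le_cancel_iff nr
    by (smt (verit) ln_mono zero_less_numeral)
  have Lhalf: "L \<le> real n / 2" unfolding L_def using ln_le_half nr .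
  show ?thesis
  proof (cases "\<theta> = 0")
    case True
    have "integral\<^sup>L M (\<lambda>\<omega>. (Y \<omega> - m)\<^sup>2) = 0"
    proof -
      have "0 \<le> integral\<^sup>L M (\<lambda>\<omega>. (Y \<omega> - m)\<^sup>2)" by (rule integral_nonneg_AE) simp
      moreover have "integral\<^sup>L M (\<lambda>\<omega>. (Y \<omega> - m)\<^sup>2) \<le> 0" using var True unfolding \<theta>_def by simp
      ultimately show ?thesis by linarith
    qed
    hence "AE \<omega> in M. (Y \<omega> - m)\<^sup>2 = 0" using integral_nonneg_eq_0_iff_AE[OF int2] by simp
    hence "AE \<omega> in M. ennreal ((Y \<omega> - m)^4) = 0" by eventually_elim simp
    hence "(\<integral>\<^sup>+\<omega>. ennreal ((Y \<omega> - m)^4) \<partial>M) = 0" by (simp add: nn_integral_0_iff_AE)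
    thus ?thesis by simp
  next
    case False
    hence thp: "0 < \<theta>" using th0 by simp
    define a where "a = (\<lambda>j::nat. \<theta> * (3 * L + 3 * real j))"
    define S where "S = (\<lambda>j::nat. {\<omega> \<in> space M. \<bar>Y \<omega> - m\<bar> > a j})"
    have Ssets[measurable]: "S j \<in> sets M" for j unfolding S_def by measurable
    have Smeas: "measure M (S j) \<le> exp (- 3 * real j) / (real n)\<^sup>2" for j
    proof -
      define \<delta> where "\<delta> = exp (- 3 * real j) / (real n)\<^sup>2"
      have d0: "0 < \<delta>" unfolding \<delta>_def using nr by simp
      have "exp (- 3 * real j) \<le> 1" by simp
      moreover have "1 < (real n)\<^sup>2" using one_less_power[of "real n" 2] nr by simp
      ultimately have "exp (- 3 * real j) < (real n)\<^sup>2" by linarith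
      hence d1: "\<delta> < 1" unfolding \<delta>_def using nr by (simp add: divide_less_eq)
      have "ln (real n / \<delta>) = ln ((real n)^3 * exp (3 * real j))"
        unfolding \<delta>_def using nr by (simp add: exp_minus field_simps power3_eq_cube power2_eq_square)
      also have "\<dots> = 3 * L + 3 * real j" unfolding L_def using nr by (simp add: ln_mult ln_realpow)
      finally have "H * ln (real n / \<delta>) / s = a j" unfolding a_def \<theta>_def by simp
      hence "S j = {\<omega> \<in> space M. \<bar>Y \<omega> - m\<bar> > H * ln (real n / \<delta>) / s}" unfolding S_def by simp
      thus ?thesis using tail[OF d0 d1] unfolding \<delta>_def by simp
    qed
    have pw: "ennreal ((Y \<omega> - m)^4) \<le> ennreal ((a 0)\<^sup>2 * (Y \<omega> - m)\<^sup>2)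
        + (\<Sum>j. ennreal ((a (Suc j))^4) * indicator (S j) \<omega>)" if \<omega>: "\<omega> \<in> space M" for \<omega>
    proof (cases "\<bar>Y \<omega> - m\<bar> \<le> a 0")
      case True
      have "(Y \<omega> - m)^4 = (Y \<omega> - m)\<^sup>2 * (Y \<omega> - m)\<^sup>2" by (simp add: power4_eq_xxxx power2_eq_square)
      also have "\<dots> \<le> (a 0)\<^sup>2 * (Y \<omega> - m)\<^sup>2"
        by (intro mult_right_mono) (use True in \<open>auto, metis abs_ge_zero power2_abs power_mono\<close>)
      finally have "ennreal ((Y \<omega> - m)^4) \<le> ennreal ((a 0)\<^sup>2 * (Y \<omega> - m)\<^sup>2)" by (rule ennreal_leI)
      moreover have "ennreal ((a 0)\<^sup>2 * (Y \<omega> - m)\<^sup>2) \<le> ennreal ((a 0)\<^sup>2 * (Y \<omega> - m)\<^sup>2)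
        + (\<Sum>j. ennreal ((a (Suc j))^4) * indicator (S j) \<omega>)" by (rule add_increasing2) auto
      ultimately show ?thesis by (rule order_trans)
    next
      case False
      define z where "z = \<bar>Y \<omega> - m\<bar>"
      have zpos: "(z / \<theta> - 3 * L) / 3 > 0" using False thp unfolding z_def a_def
        by (simp add: field_simps)
      define c where "c = \<lceil>(z / \<theta> - 3 * L) / 3\<rceil>"
      have c1: "1 \<le> c" unfolding c_def using zpos by (simp add: le_ceiling_iff)
      have cc: "real_of_int c - 1 < (z / \<theta> - 3 * L) / 3" "(z / \<theta> - 3 * L) / 3 \<le> real_of_int c"
        unfolding c_def using ceiling_correct[of "(z / \<theta> - 3 * L) / 3"] by linarith+
      define k where "k = nat (c - 1)"
      have kc: "real k = real_of_int c - 1" unfolding k_def using c1 by simp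
      have zk: "a k < z" unfolding a_def kc using cc(1) thp by (simp add: field_simps)
      have zk1: "z \<le> a (Suc k)" unfolding a_def using kc cc(2) thp by (simp add: field_simps)
      have inS: "\<omega> \<in> S k" unfolding S_def using \<omega> zk z_def by simp
      have "(Y \<omega> - m)^4 = z^4" unfolding z_def by (simp add: power_even_abs_numeral)
      also have "\<dots> \<le> (a (Suc k))^4" using zk1 by (intro power_mono) (auto simp: z_def)
      finally have "ennreal ((Y \<omega> - m)^4) \<le> ennreal ((a (Suc k))^4) * indicator (S k) \<omega>"
        using inS by (simp add: ennreal_leI)
      also have "\<dots> \<le> (\<Sum>j. ennreal ((a (Suc j))^4) * indicator (S j) \<omega>)"
      proof -
        define f where "f = (\<lambda>j. ennreal ((a (Suc j))^4) * indicator (S j) \<omega>)"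
        have "sum f {k} \<le> suminf f" by (intro sum_le_suminf) auto
        hence "f k \<le> suminf f" by simp
        thus ?thesis unfolding f_def .
      qed
      also have "(\<Sum>j. ennreal ((a (Suc j))^4) * indicator (S j) \<omega>) \<le> ennreal ((a 0)\<^sup>2 * (Y \<omega> - m)\<^sup>2)
        + (\<Sum>j. ennreal ((a (Suc j))^4) * indicator (S j) \<omega>)" by (rule add_increasing) auto
      finally show ?thesis .
    qed
    have "(\<integral>\<^sup>+\<omega>. ennreal ((Y \<omega> - m)^4) \<partial>M) \<le>
        (\<integral>\<^sup>+\<omega>. ennreal ((a 0)\<^sup>2 * (Y \<omega> - m)\<^sup>2) + (\<Sum>j. ennreal ((a (Suc j))^4) * indicator (S j) \<omega>) \<partial>M)"
      using pw by (intro nn_integral_mono) auto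
    also have "\<dots> = (\<integral>\<^sup>+\<omega>. ennreal ((a 0)\<^sup>2 * (Y \<omega> - m)\<^sup>2) \<partial>M)
        + (\<integral>\<^sup>+\<omega>. (\<Sum>j. ennreal ((a (Suc j))^4) * indicator (S j) \<omega>) \<partial>M)"
      by (intro nn_integral_add) auto
    also have "(\<integral>\<^sup>+\<omega>. ennreal ((a 0)\<^sup>2 * (Y \<omega> - m)\<^sup>2) \<partial>M) = ennreal (integral\<^sup>L M (\<lambda>\<omega>. (a 0)\<^sup>2 * (Y \<omega> - m)\<^sup>2))"
      by (intro nn_integral_eq_integral) (use int2 in auto)
    also have "integral\<^sup>L M (\<lambda>\<omega>. (a 0)\<^sup>2 * (Y \<omega> - m)\<^sup>2) = (a 0)\<^sup>2 * integral\<^sup>L M (\<lambda>\<omega>. (Y \<omega> - m)\<^sup>2)"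
      by simp
    also have "\<dots> \<le> (a 0)\<^sup>2 * \<theta>\<^sup>2" using var unfolding \<theta>_def by (intro mult_left_mono) auto
    also have "(\<integral>\<^sup>+\<omega>. (\<Sum>j. ennreal ((a (Suc j))^4) * indicator (S j) \<omega>) \<partial>M)
        = (\<Sum>j. ennreal ((a (Suc j))^4) * emeasure M (S j))"
      by (subst nn_integral_suminf) (auto simp: nn_integral_cmult_indicator)
    also have "\<dots> \<le> (\<Sum>j. ennreal (16 * \<theta>^4 * (3 * L + 3)^4 / (real n)\<^sup>2 * exp (-1) ^ j))"
    proof (intro suminf_le summableI)
      fix j
      have "emeasure M (S j) = ennreal (measure M (S j))" by (simp add: emeasure_eq_measure)
      also have "\<dots> \<le> ennreal (exp (- 3 * real j) / (real n)\<^sup>2)" using Smeas by (rule ennreal_leI)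
      finally have em: "emeasure M (S j) \<le> ennreal (exp (- 3 * real j) / (real n)\<^sup>2)" .
      have aS: "a (Suc j) \<le> \<theta> * (3 * L + 3) * (1 + real j)"
        unfolding a_def using thp L23 by (simp add: algebra_simps)
      have a0: "0 \<le> a (Suc j)" unfolding a_def using thp L23 by simp
      have "(a (Suc j))^4 * (exp (- 3 * real j) / (real n)\<^sup>2)
          \<le> (\<theta> * (3 * L + 3) * (1 + real j))^4 * (exp (- 3 * real j) / (real n)\<^sup>2)"
        using aS a0 by (intro mult_right_mono power_mono) auto
      also have "\<dots> = \<theta>^4 * (3 * L + 3)^4 / (real n)\<^sup>2 * ((1 + real j)^4 * exp (- 3 * real j))"
        by (simp add: power_mult_distrib)
      also have "\<dots> \<le> \<theta>^4 * (3 * L + 3)^4 / (real n)\<^sup>2 * (16 * exp (- real j))"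
        using poly_exp_bound[of j] by (intro mult_left_mono) auto
      also have "\<dots> = 16 * \<theta>^4 * (3 * L + 3)^4 / (real n)\<^sup>2 * exp (-1) ^ j"
        by (simp add: exp_of_nat_mult[symmetric])
      finally have r: "(a (Suc j))^4 * (exp (- 3 * real j) / (real n)\<^sup>2) \<le> 16 * \<theta>^4 * (3 * L + 3)^4 / (real n)\<^sup>2 * exp (-1) ^ j" .
      have "ennreal ((a (Suc j))^4) * emeasure M (S j) \<le> ennreal ((a (Suc j))^4) * ennreal (exp (- 3 * real j) / (real n)\<^sup>2)"
        using em by (rule mult_left_mono) simp
      also have "\<dots> = ennreal ((a (Suc j))^4 * (exp (- 3 * real j) / (real n)\<^sup>2))"
        by (simp add: ennreal_mult'[symmetric])
      also have "\<dots> \<le> ennreal (16 * \<theta>^4 * (3 * L + 3)^4 / (real n)\<^sup>2 * exp (-1) ^ j)"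
        using r by (rule ennreal_leI)
      finally show "ennreal ((a (Suc j))^4) * emeasure M (S j) \<le> ennreal (16 * \<theta>^4 * (3 * L + 3)^4 / (real n)\<^sup>2 * exp (-1) ^ j)" .
    qed
    also have "\<dots> = ennreal (16 * \<theta>^4 * (3 * L + 3)^4 / (real n)\<^sup>2 * (1 / (1 - exp (-1))))"
    proof -
      have e1: "exp (-1::real) < 1" by simp
      have sm: "summable (\<lambda>j. 16 * \<theta>^4 * (3 * L + 3)^4 / (real n)\<^sup>2 * exp (-1::real) ^ j)"
        using e1 by (intro summable_mult summable_geometric) auto
      have "(\<Sum>j. ennreal (16 * \<theta>^4 * (3 * L + 3)^4 / (real n)\<^sup>2 * exp (-1) ^ j))
          = ennreal (\<Sum>j. 16 * \<theta>^4 * (3 * L + 3)^4 / (real n)\<^sup>2 * exp (-1) ^ j)"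
        using sm by (intro suminf_ennreal2) auto
      also have "(\<Sum>j. 16 * \<theta>^4 * (3 * L + 3)^4 / (real n)\<^sup>2 * exp (-1::real) ^ j) =
          16 * \<theta>^4 * (3 * L + 3)^4 / (real n)\<^sup>2 * (\<Sum>j. exp (-1::real) ^ j)"
        using e1 by (intro suminf_mult summable_geometric) auto
      also have "(\<Sum>j. exp (-1::real) ^ j) = 1 / (1 - exp (-1))"
        using e1 by (intro suminf_geometric) auto
      finally show ?thesis .
    qed
    finally have main: "(\<integral>\<^sup>+\<omega>. ennreal ((Y \<omega> - m)^4) \<partial>M) \<le> ennreal ((a 0)\<^sup>2 * \<theta>\<^sup>2)
        + ennreal (16 * \<theta>^4 * (3 * L + 3)^4 / (real n)\<^sup>2 * (1 / (1 - exp (-1))))"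
      by (simp add: add_mono ennreal_leI)
    have eb: "1 / (1 - exp (-1::real)) \<le> 2"
    proof -
      have "2 \<le> exp (1::real)" using exp_ge_add_one_self[of 1] by simp
      hence "exp (-1::real) \<le> 1/2" by (simp add: exp_minus field_simps)
      thus ?thesis by (simp add: divide_le_eq)
    qed
    have Lb: "(3 * L + 3)^4 \<le> 3165 * L^4"
    proof -
      have "3 * L + 3 \<le> 15/2 * L" using L23 by simp
      hence "(3 * L + 3)^4 \<le> (15/2 * L)^4" by (intro power_mono) (use L23 in auto)
      moreover have "(15/2 * L)^4 = 50625/16 * L^4" by (simp add: power_mult_distrib power_divide)
      moreover have "0 \<le> L^4" using L23 by simp
      ultimately show ?thesis by linarith
    qed
    have Ln: "L^4 / (real n)\<^sup>2 \<le> L\<^sup>2 / 4"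
    proof -
      have "L\<^sup>2 \<le> (real n / 2)\<^sup>2" using Lhalf L23 by (intro power_mono) auto
      hence a: "L\<^sup>2 \<le> (real n)\<^sup>2 / 4" by (simp add: power_divide)
      have "L^4 = L\<^sup>2 * L\<^sup>2" by (simp add: power4_eq_xxxx power2_eq_square)
      also have "\<dots> \<le> L\<^sup>2 * ((real n)\<^sup>2 / 4)" using a by (intro mult_left_mono) auto
      finally have b: "L^4 \<le> L\<^sup>2 / 4 * (real n)\<^sup>2" by simp
      have np: "0 < (real n)\<^sup>2" using nr by simp
      show ?thesis using b by (subst pos_divide_le_eq[OF np])
    qed
    have "16 * \<theta>^4 * (3 * L + 3)^4 / (real n)\<^sup>2 * (1 / (1 - exp (-1))) \<le> 16 * \<theta>^4 * (3 * L + 3)^4 / (real n)\<^sup>2 * 2"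
      using eb nr by (intro mult_left_mono) auto
    also have "\<dots> = 32 * \<theta>^4 * ((3 * L + 3)^4 / (real n)\<^sup>2)" by simp
    also have "\<dots> \<le> 32 * \<theta>^4 * (3165 * (L^4 / (real n)\<^sup>2))"
      using Lb nr by (intro mult_left_mono) (auto simp: divide_right_mono)
    also have "\<dots> \<le> 32 * \<theta>^4 * (3165 * (L\<^sup>2 / 4))"
      using Ln by (intro mult_left_mono) auto
    finally have t2: "16 * \<theta>^4 * (3 * L + 3)^4 / (real n)\<^sup>2 * (1 / (1 - exp (-1))) \<le> 25320 * \<theta>^4 * L\<^sup>2"
      by (simp add: mult_ac)
    have t1: "(a 0)\<^sup>2 * \<theta>\<^sup>2 = 9 * \<theta>^4 * L\<^sup>2" unfolding a_def by (simp add: power2_eq_square power4_eq_xxxx)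
    have "ennreal ((a 0)\<^sup>2 * \<theta>\<^sup>2) + ennreal (16 * \<theta>^4 * (3 * L + 3)^4 / (real n)\<^sup>2 * (1 / (1 - exp (-1))))
        = ennreal ((a 0)\<^sup>2 * \<theta>\<^sup>2 + 16 * \<theta>^4 * (3 * L + 3)^4 / (real n)\<^sup>2 * (1 / (1 - exp (-1))))"
      using eb by (intro ennreal_plus[symmetric]) (auto simp: t1)
    also have "\<dots> \<le> ennreal (25400 * \<theta>^4 * L\<^sup>2)"
      proof (intro ennreal_leI)
      have "0 \<le> \<theta>^4 * L\<^sup>2" using th0 by simp
      thus "(a 0)\<^sup>2 * \<theta>\<^sup>2 + 16 * \<theta>^4 * (3 * L + 3)^4 / (real n)\<^sup>2 * (1 / (1 - exp (-1))) \<le> 25400 * \<theta>^4 * L\<^sup>2"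
        using t1 t2 by (simp only: mult.assoc)
    qed
    finally show ?thesis using main unfolding \<theta>_def L_def by simp
  qed
qed

lemma quad_int:
  fixes Y :: "'w \<Rightarrow> real"
  assumes P: "prob_space M" and i1: "integrable M Y" and i2: "integrable M (\<lambda>\<omega>. (Y \<omega>)\<^sup>2)"
  shows "integrable M (\<lambda>\<omega>. C0 + C1 * Y \<omega> + C2 * (Y \<omega>)\<^sup>2)"
    "integral\<^sup>L M (\<lambda>\<omega>. C0 + C1 * Y \<omega> + C2 * (Y \<omega>)\<^sup>2)
       = C0 + C1 * integral\<^sup>L M Y + C2 * integral\<^sup>L M (\<lambda>\<omega>. (Y \<omega>)\<^sup>2)"
proof -
  interpret prob_space M by (rule P)
  show "integrable M (\<lambda>\<omega>. C0 + C1 * Y \<omega> + C2 * (Y \<omega>)\<^sup>2)" using i1 i2 by auto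
  show "integral\<^sup>L M (\<lambda>\<omega>. C0 + C1 * Y \<omega> + C2 * (Y \<omega>)\<^sup>2)
       = C0 + C1 * integral\<^sup>L M Y + C2 * integral\<^sup>L M (\<lambda>\<omega>. (Y \<omega>)\<^sup>2)"
    using i1 i2 prob_space.prob_space[OF P] by (simp add: integral_add integral_mult_right_zero)
qed

lemma var_basic:
  fixes Y :: "'w \<Rightarrow> real"
  assumes P: "prob_space M" and i1: "integrable M Y" and i2: "integrable M (\<lambda>\<omega>. (Y \<omega>)\<^sup>2)"
  shows "integrable M (\<lambda>\<omega>. (Y \<omega> - integral\<^sup>L M Y)\<^sup>2)"
    "integral\<^sup>L M (\<lambda>\<omega>. (Y \<omega> - integral\<^sup>L M Y)\<^sup>2) = integral\<^sup>L M (\<lambda>\<omega>. (Y \<omega>)\<^sup>2) - (integral\<^sup>L M Y)\<^sup>2"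
    "0 \<le> integral\<^sup>L M (\<lambda>\<omega>. (Y \<omega>)\<^sup>2) - (integral\<^sup>L M Y)\<^sup>2"
proof -
  interpret prob_space M by (rule P)
  define m where "m = integral\<^sup>L M Y"
  have eq: "(\<lambda>\<omega>. (Y \<omega> - m)\<^sup>2) = (\<lambda>\<omega>. m\<^sup>2 + (-2 * m) * Y \<omega> + 1 * (Y \<omega>)\<^sup>2)"
    by (rule ext) (simp add: power2_eq_square algebra_simps)
  show I: "integrable M (\<lambda>\<omega>. (Y \<omega> - integral\<^sup>L M Y)\<^sup>2)"
    unfolding m_def[symmetric] eq using quad_int(1)[OF P i1 i2] .
  have "integral\<^sup>L M (\<lambda>\<omega>. (Y \<omega> - m)\<^sup>2) = integral\<^sup>L M (\<lambda>\<omega>. m\<^sup>2 + (-2 * m) * Y \<omega> + 1 * (Y \<omega>)\<^sup>2)"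
    by (rule arg_cong[where f="integral\<^sup>L M"]) (rule eq)
  also have "\<dots> = m\<^sup>2 + (-2 * m) * integral\<^sup>L M Y + 1 * integral\<^sup>L M (\<lambda>\<omega>. (Y \<omega>)\<^sup>2)"
    by (rule quad_int(2)[OF P i1 i2])
  finally have "integral\<^sup>L M (\<lambda>\<omega>. (Y \<omega> - m)\<^sup>2) = m\<^sup>2 + (-2 * m) * m + 1 * integral\<^sup>L M (\<lambda>\<omega>. (Y \<omega>)\<^sup>2)"
    unfolding m_def .
  thus E: "integral\<^sup>L M (\<lambda>\<omega>. (Y \<omega> - integral\<^sup>L M Y)\<^sup>2) = integral\<^sup>L M (\<lambda>\<omega>. (Y \<omega>)\<^sup>2) - (integral\<^sup>L M Y)\<^sup>2"
    unfolding m_def by (simp add: power2_eq_square)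
  have "0 \<le> integral\<^sup>L M (\<lambda>\<omega>. (Y \<omega> - integral\<^sup>L M Y)\<^sup>2)" by (rule integral_nonneg_AE) simp
  thus "0 \<le> integral\<^sup>L M (\<lambda>\<omega>. (Y \<omega>)\<^sup>2) - (integral\<^sup>L M Y)\<^sup>2" using E by simp
qed

lemma quad_var:
  fixes Y :: "'w \<Rightarrow> real"
  assumes P: "prob_space M" and Ym[measurable]: "Y \<in> borel_measurable M"
    and i1: "integrable M Y" and i2: "integrable M (\<lambda>\<omega>. (Y \<omega>)\<^sup>2)"
    and Q: "(\<integral>\<^sup>+\<omega>. ennreal ((Y \<omega> - integral\<^sup>L M Y)^4) \<partial>M) \<le> ennreal Q" and Q0: "0 \<le> Q"
  shows "integral\<^sup>L M (\<lambda>\<omega>. (C0 + C1 * Y \<omega> + C2 * (Y \<omega>)\<^sup>2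
            - integral\<^sup>L M (\<lambda>\<omega>'. C0 + C1 * Y \<omega>' + C2 * (Y \<omega>')\<^sup>2))\<^sup>2)
     \<le> 2 * (C1 + 2 * C2 * integral\<^sup>L M Y)\<^sup>2 * (integral\<^sup>L M (\<lambda>\<omega>. (Y \<omega>)\<^sup>2) - (integral\<^sup>L M Y)\<^sup>2)
       + 2 * C2\<^sup>2 * ((integral\<^sup>L M (\<lambda>\<omega>. (Y \<omega>)\<^sup>2) - (integral\<^sup>L M Y)\<^sup>2)\<^sup>2 + Q)"
proof -
  interpret prob_space M by (rule P)
  define m where "m = integral\<^sup>L M Y"
  define S where "S = integral\<^sup>L M (\<lambda>\<omega>. (Y \<omega>)\<^sup>2) - m\<^sup>2"
  define g where "g = C1 + 2 * C2 * m"
  define EF where "EF = integral\<^sup>L M (\<lambda>\<omega>'. C0 + C1 * Y \<omega>' + C2 * (Y \<omega>')\<^sup>2)"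
  have S0: "0 \<le> S" unfolding S_def m_def using var_basic(3)[OF P i1 i2] .
  have EF: "EF = C0 + C1 * m + C2 * (S + m\<^sup>2)" unfolding EF_def quad_int(2)[OF P i1 i2] S_def m_def by simp
  have iz: "integrable M (\<lambda>\<omega>. (Y \<omega> - m)\<^sup>2)" unfolding m_def using var_basic(1)[OF P i1 i2] .
  have Ez: "integral\<^sup>L M (\<lambda>\<omega>. (Y \<omega> - m)\<^sup>2) = S" unfolding m_def S_def using var_basic(2)[OF P i1 i2] .
  have pw: "(C0 + C1 * Y \<omega> + C2 * (Y \<omega>)\<^sup>2 - EF)\<^sup>2 \<le> (2 * g\<^sup>2 * (Y \<omega> - m)\<^sup>2 + 2 * C2\<^sup>2 * S\<^sup>2) + 2 * C2\<^sup>2 * (Y \<omega> - m)^4" for \<omega>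
  proof -
    define z where "z = Y \<omega> - m"
    have e: "C0 + C1 * Y \<omega> + C2 * (Y \<omega>)\<^sup>2 - EF = g * z + C2 * (z\<^sup>2 - S)"
      unfolding EF g_def z_def by (simp add: power2_eq_square algebra_simps)
    have A: "(g * z + C2 * (z\<^sup>2 - S))\<^sup>2 \<le> 2 * (g * z)\<^sup>2 + 2 * (C2 * (z\<^sup>2 - S))\<^sup>2"
      using sum_squares_ge_zero[of "g*z - C2 * (z\<^sup>2 - S)" 0] by (simp add: power2_eq_square algebra_simps)
    have "(z\<^sup>2 - S)\<^sup>2 \<le> z^4 + S\<^sup>2"
      using S0 by (simp add: power2_eq_square power4_eq_xxxx algebra_simps)
    hence "C2\<^sup>2 * (z\<^sup>2 - S)\<^sup>2 \<le> C2\<^sup>2 * (z^4 + S\<^sup>2)" by (intro mult_left_mono) auto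
    moreover have "(C2 * (z\<^sup>2 - S))\<^sup>2 = C2\<^sup>2 * (z\<^sup>2 - S)\<^sup>2" by (simp only: power_mult_distrib)
    ultimately have B: "(C2 * (z\<^sup>2 - S))\<^sup>2 \<le> C2\<^sup>2 * z^4 + C2\<^sup>2 * S\<^sup>2" by (simp add: distrib_left)
    have C: "(g * z)\<^sup>2 = g\<^sup>2 * z\<^sup>2" by (simp add: power_mult_distrib)
    have "(g * z + C2 * (z\<^sup>2 - S))\<^sup>2 \<le> (2 * g\<^sup>2 * z\<^sup>2 + 2 * C2\<^sup>2 * S\<^sup>2) + 2 * C2\<^sup>2 * z^4"
      using A B C by linarith
    thus ?thesis unfolding e z_def .
  qed
  have "integral\<^sup>L M (\<lambda>\<omega>. (C0 + C1 * Y \<omega> + C2 * (Y \<omega>)\<^sup>2 - EF)\<^sup>2)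
      = enn2real (\<integral>\<^sup>+\<omega>. ennreal ((C0 + C1 * Y \<omega> + C2 * (Y \<omega>)\<^sup>2 - EF)\<^sup>2) \<partial>M)"
    by (intro integral_eq_nn_integral) auto
  also have "\<dots> \<le> 2 * g\<^sup>2 * S + 2 * C2\<^sup>2 * S\<^sup>2 + 2 * C2\<^sup>2 * Q"
  proof (intro enn2real_leI)
    show "0 \<le> 2 * g\<^sup>2 * S + 2 * C2\<^sup>2 * S\<^sup>2 + 2 * C2\<^sup>2 * Q" using S0 Q0 by simp
    have "(\<integral>\<^sup>+\<omega>. ennreal ((C0 + C1 * Y \<omega> + C2 * (Y \<omega>)\<^sup>2 - EF)\<^sup>2) \<partial>M)
        \<le> (\<integral>\<^sup>+\<omega>. ennreal (2 * g\<^sup>2 * (Y \<omega> - m)\<^sup>2 + 2 * C2\<^sup>2 * S\<^sup>2) + ennreal (2 * C2\<^sup>2) * ennreal ((Y \<omega> - m)^4) \<partial>M)"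
    proof (intro nn_integral_mono)
      fix \<omega>
      have "ennreal ((C0 + C1 * Y \<omega> + C2 * (Y \<omega>)\<^sup>2 - EF)\<^sup>2) \<le> ennreal ((2 * g\<^sup>2 * (Y \<omega> - m)\<^sup>2 + 2 * C2\<^sup>2 * S\<^sup>2) + 2 * C2\<^sup>2 * (Y \<omega> - m)^4)"
        using pw by (rule ennreal_leI)
      also have "\<dots> = ennreal (2 * g\<^sup>2 * (Y \<omega> - m)\<^sup>2 + 2 * C2\<^sup>2 * S\<^sup>2) + ennreal (2 * C2\<^sup>2) * ennreal ((Y \<omega> - m)^4)"
      proof -
        have a: "0 \<le> 2 * g\<^sup>2 * (Y \<omega> - m)\<^sup>2 + 2 * C2\<^sup>2 * S\<^sup>2" by simp
        have b: "0 \<le> 2 * C2\<^sup>2 * (Y \<omega> - m)^4" by (simp add: zero_le_even_power)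
        have c: "ennreal (2 * C2\<^sup>2 * (Y \<omega> - m)^4) = ennreal (2 * C2\<^sup>2) * ennreal ((Y \<omega> - m)^4)"
          by (rule ennreal_mult) (auto simp: zero_le_even_power)
        show ?thesis using ennreal_plus[OF a b] c by simp
      qed
      finally show "ennreal ((C0 + C1 * Y \<omega> + C2 * (Y \<omega>)\<^sup>2 - EF)\<^sup>2) \<le> ennreal (2 * g\<^sup>2 * (Y \<omega> - m)\<^sup>2 + 2 * C2\<^sup>2 * S\<^sup>2) + ennreal (2 * C2\<^sup>2) * ennreal ((Y \<omega> - m)^4)" .
    qed
    also have "\<dots> = (\<integral>\<^sup>+\<omega>. ennreal (2 * g\<^sup>2 * (Y \<omega> - m)\<^sup>2 + 2 * C2\<^sup>2 * S\<^sup>2) \<partial>M)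
        + ennreal (2 * C2\<^sup>2) * (\<integral>\<^sup>+\<omega>. ennreal ((Y \<omega> - m)^4) \<partial>M)"
      by (subst nn_integral_add) (auto simp: nn_integral_cmult)
    also have "(\<integral>\<^sup>+\<omega>. ennreal (2 * g\<^sup>2 * (Y \<omega> - m)\<^sup>2 + 2 * C2\<^sup>2 * S\<^sup>2) \<partial>M)
        = ennreal (integral\<^sup>L M (\<lambda>\<omega>. 2 * g\<^sup>2 * (Y \<omega> - m)\<^sup>2 + 2 * C2\<^sup>2 * S\<^sup>2))"
      by (intro nn_integral_eq_integral) (use iz in auto)
    also have "integral\<^sup>L M (\<lambda>\<omega>. 2 * g\<^sup>2 * (Y \<omega> - m)\<^sup>2 + 2 * C2\<^sup>2 * S\<^sup>2) = 2 * g\<^sup>2 * S + 2 * C2\<^sup>2 * S\<^sup>2"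
      using iz Ez prob_space.prob_space[OF P] by (simp add: integral_add)
    also have "ennreal (2 * C2\<^sup>2) * (\<integral>\<^sup>+\<omega>. ennreal ((Y \<omega> - m)^4) \<partial>M) \<le> ennreal (2 * C2\<^sup>2) * ennreal Q"
      using Q unfolding m_def by (intro mult_left_mono) auto
    also have "ennreal (2 * g\<^sup>2 * S + 2 * C2\<^sup>2 * S\<^sup>2) + ennreal (2 * C2\<^sup>2) * ennreal Q
        = ennreal (2 * g\<^sup>2 * S + 2 * C2\<^sup>2 * S\<^sup>2 + 2 * C2\<^sup>2 * Q)"
    proof -
      have c: "ennreal (2 * C2\<^sup>2) * ennreal Q = ennreal (2 * C2\<^sup>2 * Q)"
        by (rule ennreal_mult[symmetric]) (use Q0 in auto)
      have a: "0 \<le> 2 * g\<^sup>2 * S + 2 * C2\<^sup>2 * S\<^sup>2" using S0 by simp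
      have b: "0 \<le> 2 * C2\<^sup>2 * Q" using Q0 by simp
      show ?thesis unfolding c using ennreal_plus[OF a b] by simp
    qed
    finally show "(\<integral>\<^sup>+\<omega>. ennreal ((C0 + C1 * Y \<omega> + C2 * (Y \<omega>)\<^sup>2 - EF)\<^sup>2) \<partial>M) \<le> ennreal (2 * g\<^sup>2 * S + 2 * C2\<^sup>2 * S\<^sup>2 + 2 * C2\<^sup>2 * Q)"
      by (simp add: add_mono)
  qed
  finally show ?thesis unfolding EF_def g_def S_def m_def by (simp add: algebra_simps)
qed

lemma L2_abs_eq: "L2_set (\<lambda>i. \<bar>f i\<bar>) K = L2_set f K"
  unfolding L2_set_def by simp

lemma L2_abs_mono: assumes "\<And>i. i \<in> K \<Longrightarrow> \<bar>f i\<bar> \<le> g i" shows "L2_set f K \<le> L2_set g K"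
proof -
  have "L2_set (\<lambda>i. \<bar>f i\<bar>) K \<le> L2_set g K" using assms by (intro L2_set_mono) auto
  thus ?thesis by (simp add: L2_abs_eq)
qed

lemma L2_const_bound: assumes "\<And>i. i \<in> K \<Longrightarrow> \<bar>f i\<bar> \<le> C"
  shows "L2_set f K \<le> sqrt (real (card K)) * C"
proof (cases "K = {}")
  case True thus ?thesis by simp
next
  case False
  then obtain i where "i \<in> K" by blast
  hence C0: "0 \<le> C" using assms[of i] by linarith
  have "L2_set f K \<le> L2_set (\<lambda>_. C) K" using assms by (rule L2_abs_mono)
  thus ?thesis using C0 by (simp add: L2_set_constant)
qed

lemma L2_comp: assumes "finite K" "i \<in> K" shows "\<bar>f i\<bar> \<le> L2_set f K"
  using member_le_L2_set[OF assms, of "\<lambda>i. \<bar>f i\<bar>"] by (simp add: L2_abs_eq)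

lemma L2_scale: "L2_set (\<lambda>i. c * f i) K = \<bar>c\<bar> * L2_set f K"
  unfolding L2_set_def by (simp add: power_mult_distrib real_sqrt_mult flip: sum_distrib_left)

lemma norm2_vec: "norm2 (Matrix.vec n f) = L2_set f {..<n}"
  unfolding norm2_L2 by (intro L2_set_cong) auto

lemma norm2_carrier: "u \<in> carrier_vec n \<Longrightarrow> norm2 u = L2_set (\<lambda>i. u $ i) {..<n}"
  unfolding norm2_L2 by auto

lemma mat_diag_mult_vec_idx:
  assumes "x \<in> carrier_vec n" "i < n"
  shows "(mat_diag n f *\<^sub>v x) $ i = f i * x $ i"
  using diag_mult_vec[OF assms(1)] assms(2) by simp

lemma glue:
  fixes Rm Pm :: "real mat"
  assumes xv: "dim_vec xv = n" and sv: "dim_vec sv = n" and qv: "dim_vec qv = n"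
    and Rm: "Rm \<in> carrier_mat b n" and Pm: "Pm \<in> carrier_mat n n" and dm: "dm \<in> carrier_vec n"
    and i: "i < n"
  shows "(vdiag xv * vdiag qv * (1\<^sub>m n - transpose_mat Rm * Rm * Pm) * vdiag qv *\<^sub>v dm) $ i
          = xv $ i * qv $ i * ((vdiag qv *\<^sub>v dm) $ i - ((transpose_mat Rm * Rm) *\<^sub>v (Pm *\<^sub>v (vdiag qv *\<^sub>v dm))) $ i)"
    "(vdiag sv * vdiag qv * transpose_mat Rm * Rm * Pm * vdiag qv *\<^sub>v dm) $ i
          = sv $ i * qv $ i * ((transpose_mat Rm * Rm) *\<^sub>v (Pm *\<^sub>v (vdiag qv *\<^sub>v dm))) $ i"
proof -
  have X: "vdiag xv \<in> carrier_mat n n" using xv by (rule vdiag_carrier')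
  have S: "vdiag sv \<in> carrier_mat n n" using sv by (rule vdiag_carrier')
  have Q: "vdiag qv \<in> carrier_mat n n" using qv by (rule vdiag_carrier')
  have RT: "transpose_mat Rm \<in> carrier_mat n b" using Rm by simp
  have RR: "transpose_mat Rm * Rm \<in> carrier_mat n n" using RT Rm by (rule mult_carrier_mat)
  have T: "transpose_mat Rm * Rm * Pm \<in> carrier_mat n n" using RR Pm by (rule mult_carrier_mat)
  have IT: "1\<^sub>m n - transpose_mat Rm * Rm * Pm \<in> carrier_mat n n" using T by (simp add: minus_carrier_mat)
  define u where "u = vdiag qv *\<^sub>v dm"
  have u: "u \<in> carrier_vec n" unfolding u_def using Q dm by simp
  define pu where "pu = Pm *\<^sub>v u"
  have pu: "pu \<in> carrier_vec n" unfolding pu_def using Pm u by simp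
  define y where "y = (transpose_mat Rm * Rm) *\<^sub>v pu"
  have y: "y \<in> carrier_vec n" unfolding y_def using RR pu by simp
  have y2: "y = transpose_mat Rm *\<^sub>v (Rm *\<^sub>v pu)" unfolding y_def by (rule assoc_mult_mat_vec[OF RT Rm pu])
  have XQ: "vdiag xv * vdiag qv = mat_diag n (\<lambda>i. xv $ i * qv $ i)" unfolding vdiag_def xv qv by simp
  have SQ: "vdiag sv * vdiag qv = mat_diag n (\<lambda>i. sv $ i * qv $ i)" unfolding vdiag_def sv qv by simp
  have XQc: "vdiag xv * vdiag qv \<in> carrier_mat n n" using X Q by (rule mult_carrier_mat)
  have SQc: "vdiag sv * vdiag qv \<in> carrier_mat n n" using S Q by (rule mult_carrier_mat)
  have "(vdiag xv * vdiag qv * (1\<^sub>m n - transpose_mat Rm * Rm * Pm) * vdiag qv *\<^sub>v dm)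
      = (vdiag xv * vdiag qv * (1\<^sub>m n - transpose_mat Rm * Rm * Pm)) *\<^sub>v u"
    unfolding u_def by (rule assoc_mult_mat_vec[OF mult_carrier_mat[OF XQc IT] Q dm])
  also have "\<dots> = (vdiag xv * vdiag qv) *\<^sub>v ((1\<^sub>m n - transpose_mat Rm * Rm * Pm) *\<^sub>v u)"
    by (rule assoc_mult_mat_vec[OF XQc IT u])
  also have "(1\<^sub>m n - transpose_mat Rm * Rm * Pm) *\<^sub>v u = u - y"
  proof -
    have "(1\<^sub>m n - transpose_mat Rm * Rm * Pm) *\<^sub>v u = 1\<^sub>m n *\<^sub>v u - (transpose_mat Rm * Rm * Pm) *\<^sub>v u"
      by (rule minus_mult_distrib_mat_vec[OF one_carrier_mat T u])
    also have "(transpose_mat Rm * Rm * Pm) *\<^sub>v u = y" unfolding y_def pu_def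
      by (rule assoc_mult_mat_vec[OF RR Pm u])
    finally show ?thesis using u by simp
  qed
  finally show "(vdiag xv * vdiag qv * (1\<^sub>m n - transpose_mat Rm * Rm * Pm) * vdiag qv *\<^sub>v dm) $ i
          = xv $ i * qv $ i * ((vdiag qv *\<^sub>v dm) $ i - ((transpose_mat Rm * Rm) *\<^sub>v (Pm *\<^sub>v (vdiag qv *\<^sub>v dm))) $ i)"
    unfolding XQ u_def[symmetric] pu_def[symmetric] y_def[symmetric]
    using mat_diag_mult_vec_idx[of "u - y" n i] u y i by simp
  have "(vdiag sv * vdiag qv * transpose_mat Rm * Rm * Pm * vdiag qv *\<^sub>v dm)
      = (vdiag sv * vdiag qv * transpose_mat Rm * Rm * Pm) *\<^sub>v u"
    unfolding u_def
    by (rule assoc_mult_mat_vec[OF mult_carrier_mat[OF mult_carrier_mat[OF mult_carrier_mat[OF SQc RT] Rm] Pm] Q dm])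
  also have "\<dots> = (vdiag sv * vdiag qv * transpose_mat Rm * Rm) *\<^sub>v pu"
    unfolding pu_def by (rule assoc_mult_mat_vec[OF mult_carrier_mat[OF mult_carrier_mat[OF SQc RT] Rm] Pm u])
  also have "\<dots> = (vdiag sv * vdiag qv * transpose_mat Rm) *\<^sub>v (Rm *\<^sub>v pu)"
    by (rule assoc_mult_mat_vec[OF mult_carrier_mat[OF SQc RT] Rm pu])
  also have "\<dots> = (vdiag sv * vdiag qv) *\<^sub>v y"
    unfolding y2 by (rule assoc_mult_mat_vec[OF SQc RT]) (use Rm pu in simp)
  finally show "(vdiag sv * vdiag qv * transpose_mat Rm * Rm * Pm * vdiag qv *\<^sub>v dm) $ i
          = sv $ i * qv $ i * ((transpose_mat Rm * Rm) *\<^sub>v (Pm *\<^sub>v (vdiag qv *\<^sub>v dm))) $ i"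
    unfolding SQ u_def[symmetric] pu_def[symmetric] y_def[symmetric]
    using mat_diag_mult_vec_idx[of y n i] y i by simp
qed

lemma sqrt_minus1_le: assumes "0 \<le> x" shows "\<bar>sqrt x - 1\<bar> \<le> \<bar>x - 1\<bar>"
proof -
  have "(sqrt x - 1) * (sqrt x + 1) = x - 1" using assms by (simp add: algebra_simps)
  hence "\<bar>x - 1\<bar> = \<bar>sqrt x - 1\<bar> * \<bar>sqrt x + 1\<bar>" by (simp add: abs_mult[symmetric])
  also have "\<bar>sqrt x + 1\<bar> = sqrt x + 1" using real_sqrt_ge_zero[OF assms] by simp
  finally have eq: "\<bar>x - 1\<bar> = \<bar>sqrt x - 1\<bar> * (sqrt x + 1)" .
  have "\<bar>sqrt x - 1\<bar> * 1 \<le> \<bar>sqrt x - 1\<bar> * (sqrt x + 1)" using assms by (intro mult_left_mono) auto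
  thus ?thesis using eq by simp
qed

lemma sq1:
  fixes \<alpha> \<beta> e :: real
  assumes "1 - e \<le> \<alpha>" "\<alpha> \<le> 1 + e" "1 - e \<le> \<beta>" "\<beta> \<le> 1 + e" "0 < e" "e < 1/4"
  shows "\<bar>sqrt (\<alpha> / \<beta>) - 1\<bar> \<le> 3 * e"
proof -
  have b0: "0 < \<beta>" using assms by linarith
  have "\<bar>\<alpha> / \<beta> - 1\<bar> = \<bar>\<alpha> - \<beta>\<bar> / \<beta>" using b0 by (simp add: field_simps)
  also have "\<dots> \<le> (2 * e) / \<beta>" using assms b0 by (intro divide_right_mono) auto
  also have "\<dots> \<le> 3 * e"
  proof -
    have "2 * e \<le> 3 * e * \<beta>"
    proof -
      have "3 * e * (1 - e) \<le> 3 * e * \<beta>" using assms by (intro mult_left_mono) auto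
      moreover have "2 * e \<le> 3 * e * (1 - e)"
      proof -
        have "e * e \<le> e * (1/4)" using assms by (intro mult_left_mono) auto
        moreover have "3 * e * (1 - e) = 3 * e - 3 * (e * e)" by (simp add: algebra_simps)
        ultimately show ?thesis using assms by linarith
      qed
      ultimately show ?thesis by linarith
    qed
    thus ?thesis using b0 by (simp add: divide_le_eq)
  qed
  finally have "\<bar>\<alpha> / \<beta> - 1\<bar> \<le> 3 * e" .
  moreover have "0 \<le> \<alpha> / \<beta>" using assms b0 by simp
  ultimately show ?thesis using sqrt_minus1_le by (meson order_trans)
qed

lemma sq2:
  fixes \<alpha> e :: real
  assumes "1 - e \<le> \<alpha>" "\<alpha> \<le> 1 + e" "0 < e" "e < 1/4"
  shows "\<bar>1 / sqrt \<alpha> - sqrt \<alpha>\<bar> \<le> 2 * e"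
proof -
  have a0: "3/4 \<le> \<alpha>" using assms by linarith
  have sa: "1/2 \<le> sqrt \<alpha>"
  proof -
    have "sqrt (1/4) \<le> sqrt \<alpha>" using a0 by (intro real_sqrt_le_mono) linarith
    moreover have "sqrt (1/4::real) = 1/2" by (simp add: real_sqrt_divide)
    ultimately show ?thesis by simp
  qed
  have sp: "0 < sqrt \<alpha>" using sa by linarith
  have "1 / sqrt \<alpha> - sqrt \<alpha> = (1 - \<alpha>) / sqrt \<alpha>" using sp a0 by (simp add: field_simps)
  hence "\<bar>1 / sqrt \<alpha> - sqrt \<alpha>\<bar> = \<bar>1 - \<alpha>\<bar> / sqrt \<alpha>" using sp by simp
  also have "\<dots> \<le> e / sqrt \<alpha>" using assms sp by (intro divide_right_mono) auto
  also have "\<dots> \<le> e / (1/2)" using sa assms by (intro divide_left_mono) auto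
  finally show ?thesis by simp
qed

lemma coord_scal:
  fixes xb sb wt mt e :: real
  assumes xb: "0 < xb" and sb: "0 < sb" and wt: "0 < wt" and mt: "0 < mt" and e: "0 < e" "e < 1/4"
    and w1: "(1 - e) * (xb / sb) \<le> wt" and w2: "wt \<le> (1 + e) * (xb / sb)"
    and m1: "(1 - e) * (xb * sb) \<le> mt" and m2: "mt \<le> (1 + e) * (xb * sb)"
  shows "\<bar>sb * sqrt wt / sqrt mt - 1\<bar> \<le> 3 * e"
    "\<bar>xb / sqrt wt - sb * sqrt wt\<bar> \<le> 2 * e * sqrt (xb * sb)"
proof -
  define \<alpha> where "\<alpha> = wt * sb / xb"
  define \<beta> where "\<beta> = mt / (xb * sb)"
  have a1: "1 - e \<le> \<alpha>" "\<alpha> \<le> 1 + e" unfolding \<alpha>_def using w1 w2 xb sb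
    by (simp_all add: field_simps)
  have b1: "1 - e \<le> \<beta>" "\<beta> \<le> 1 + e" unfolding \<beta>_def using m1 m2 xb sb
    by (simp_all add: field_simps)
  have "sqrt (\<alpha> / \<beta>) = sqrt (sb\<^sup>2 * wt / mt)" unfolding \<alpha>_def \<beta>_def using xb sb
    by (intro arg_cong[where f=sqrt]) (simp add: field_simps power2_eq_square)
  also have "\<dots> = sb * sqrt wt / sqrt mt" using sb by (simp add: real_sqrt_mult real_sqrt_divide)
  finally have "sqrt (\<alpha> / \<beta>) = sb * sqrt wt / sqrt mt" .
  thus "\<bar>sb * sqrt wt / sqrt mt - 1\<bar> \<le> 3 * e" using sq1[OF a1 b1 e] by simp
  have "sqrt (xb * sb) / sqrt \<alpha> = sqrt (xb\<^sup>2 / wt)" unfolding \<alpha>_def using xb sb wt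
    by (simp add: real_sqrt_divide[symmetric] field_simps power2_eq_square)
  also have "\<dots> = xb / sqrt wt" using xb by (simp add: real_sqrt_divide)
  finally have e1: "sqrt (xb * sb) * (1 / sqrt \<alpha>) = xb / sqrt wt" by simp
  have "sqrt (xb * sb) * sqrt \<alpha> = sqrt (sb\<^sup>2 * wt)" unfolding \<alpha>_def using xb sb wt
    by (simp add: real_sqrt_mult[symmetric] field_simps power2_eq_square)
  also have "\<dots> = sb * sqrt wt" using sb by (simp add: real_sqrt_mult)
  finally have e2: "sqrt (xb * sb) * sqrt \<alpha> = sb * sqrt wt" .
  have "xb / sqrt wt - sb * sqrt wt = sqrt (xb * sb) * (1 / sqrt \<alpha> - sqrt \<alpha>)"
    using e1 e2 by (simp add: right_diff_distrib)
  hence "\<bar>xb / sqrt wt - sb * sqrt wt\<bar> = sqrt (xb * sb) * \<bar>1 / sqrt \<alpha> - sqrt \<alpha>\<bar>"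
    using xb sb by (simp add: abs_mult)
  also have "\<dots> \<le> sqrt (xb * sb) * (2 * e)" using sq2[OF a1 e] xb sb by (intro mult_left_mono) auto
  finally show "\<bar>xb / sqrt wt - sb * sqrt wt\<bar> \<le> 2 * e * sqrt (xb * sb)" by (simp add: mult.commute mult.left_commute)
qed

lemma norm2_smult: "norm2 (c \<cdot>\<^sub>v u) = \<bar>c\<bar> * norm2 u"
proof -
  have "L2_set (\<lambda>i. (c \<cdot>\<^sub>v u) $ i) {..<dim_vec u} = L2_set (\<lambda>i. c * u $ i) {..<dim_vec u}"
    by (rule L2_set_cong) auto
  thus ?thesis unfolding norm2_L2 by (simp add: L2_scale)
qed

lemma L2_sum5: "L2_set (\<lambda>i. f1 i + f2 i + f3 i + f4 i + f5 i) K
   \<le> L2_set f1 K + L2_set f2 K + L2_set f3 K + L2_set f4 K + L2_set f5 K"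
proof -
  have "L2_set (\<lambda>i. f1 i + f2 i + f3 i + f4 i + f5 i) K \<le> L2_set (\<lambda>i. f1 i + f2 i + f3 i + f4 i) K + L2_set f5 K"
    by (rule L2_set_triangle_ineq)
  also have "L2_set (\<lambda>i. f1 i + f2 i + f3 i + f4 i) K \<le> L2_set (\<lambda>i. f1 i + f2 i + f3 i) K + L2_set f4 K"
    by (rule L2_set_triangle_ineq)
  also have "L2_set (\<lambda>i. f1 i + f2 i + f3 i) K \<le> L2_set (\<lambda>i. f1 i + f2 i) K + L2_set f3 K"
    by (rule L2_set_triangle_ineq)
  also have "L2_set (\<lambda>i. f1 i + f2 i) K \<le> L2_set f1 K + L2_set f2 K"
    by (rule L2_set_triangle_ineq)
  finally show ?thesis by simp
qed

lemma L2_sum3: "L2_set (\<lambda>i. f1 i + f2 i + f3 i) K \<le> L2_set f1 K + L2_set f2 K + L2_set f3 K"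
proof -
  have "L2_set (\<lambda>i. f1 i + f2 i + f3 i) K \<le> L2_set (\<lambda>i. f1 i + f2 i) K + L2_set f3 K"
    by (rule L2_set_triangle_ineq)
  also have "L2_set (\<lambda>i. f1 i + f2 i) K \<le> L2_set f1 K + L2_set f2 K"
    by (rule L2_set_triangle_ineq)
  finally show ?thesis by simp
qed

lemma L2_scale_abs: "0 \<le> c \<Longrightarrow> L2_set (\<lambda>i. c * \<bar>f i\<bar>) K = c * L2_set f K"
  by (simp add: L2_scale L2_abs_eq)

lemma abs5: "\<bar>(a::real) + b + c + d - e\<bar> \<le> \<bar>a\<bar> + \<bar>b\<bar> + \<bar>c\<bar> + \<bar>d\<bar> + \<bar>e\<bar>"
  by (smt (verit))

lemma abs3: "\<bar>(a::real) + b + c\<bar> \<le> \<bar>a\<bar> + \<bar>b\<bar> + \<bar>c\<bar>"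
  using abs_triangle_ineq[of "a+b" c] abs_triangle_ineq[of a b] by linarith

lemma E1_scalar:
  fixes mb T9 kap e dm tau mt XS h v Var Hn b :: real
  assumes T9: "0 < T9" "T9 \<le> mb" and kap: "\<bar>kap - 1\<bar> \<le> 3 * e" and mt: "\<bar>mt - mb\<bar> \<le> e * mb"
    and XS: "\<bar>XS\<bar> \<le> 2 * e * sqrt mb" and Var: "0 \<le> Var" "Var \<le> Hn\<^sup>2 / b" and h: "\<bar>h\<bar> \<le> Hn"
    and b: "0 < b"
  shows "\<bar>((kap - 1) * dm + tau * (mt - mb) + XS * h + (v - h) * h - Var) / mb\<bar>
    \<le> 3 * e / T9 * \<bar>dm\<bar> + \<bar>tau\<bar> * e + 2 * e / sqrt T9 * \<bar>h\<bar> + Hn / T9 * (\<bar>v\<bar> + \<bar>h\<bar>) + Hn\<^sup>2 / (b * T9)"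
proof -
  have mb: "0 < mb" using T9 by linarith
  have e0: "0 \<le> e" using kap by linarith
  have sm: "sqrt T9 \<le> sqrt mb" using T9 by simp
  have sT: "0 < sqrt T9" using T9 by simp
  have t1: "\<bar>(kap - 1) * dm / mb\<bar> \<le> 3 * e / T9 * \<bar>dm\<bar>"
  proof -
    have "\<bar>(kap - 1) * dm / mb\<bar> = \<bar>kap - 1\<bar> * \<bar>dm\<bar> / mb" using mb by (simp add: abs_mult)
    also have "\<dots> \<le> 3 * e * \<bar>dm\<bar> / mb" using kap mb by (intro divide_right_mono mult_right_mono) auto
    also have "\<dots> \<le> 3 * e * \<bar>dm\<bar> / T9" using T9 kap by (intro divide_left_mono) auto
    finally show ?thesis by simp
  qed
  have t2: "\<bar>tau * (mt - mb) / mb\<bar> \<le> \<bar>tau\<bar> * e"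
  proof -
    have "\<bar>tau * (mt - mb) / mb\<bar> = \<bar>tau\<bar> * (\<bar>mt - mb\<bar> / mb)" using mb by (simp add: abs_mult)
    also have "\<bar>mt - mb\<bar> / mb \<le> e" using mt mb by (simp add: divide_le_eq)
    hence "\<bar>tau\<bar> * (\<bar>mt - mb\<bar> / mb) \<le> \<bar>tau\<bar> * e" by (intro mult_left_mono) auto
    finally show ?thesis .
  qed
  have t3: "\<bar>XS * h / mb\<bar> \<le> 2 * e / sqrt T9 * \<bar>h\<bar>"
  proof -
    have "\<bar>XS * h / mb\<bar> = \<bar>XS\<bar> * \<bar>h\<bar> / mb" using mb by (simp add: abs_mult)
    also have "\<dots> \<le> 2 * e * sqrt mb * \<bar>h\<bar> / mb" using XS mb by (intro divide_right_mono mult_right_mono) auto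
    also have "\<dots> = 2 * e * \<bar>h\<bar> / sqrt mb" using mb
      by (simp add: field_simps)
    also have "\<dots> \<le> 2 * e * \<bar>h\<bar> / sqrt T9" using sm sT e0
      by (intro divide_left_mono) auto
    finally show ?thesis by simp
  qed
  have t4: "\<bar>(v - h) * h / mb\<bar> \<le> Hn / T9 * (\<bar>v\<bar> + \<bar>h\<bar>)"
  proof -
    have "\<bar>(v - h) * h / mb\<bar> = \<bar>v - h\<bar> * \<bar>h\<bar> / mb" using mb by (simp add: abs_mult)
    also have "\<dots> \<le> (\<bar>v\<bar> + \<bar>h\<bar>) * Hn / mb" using h mb
      by (intro divide_right_mono mult_mono) auto
    also have "\<dots> \<le> (\<bar>v\<bar> + \<bar>h\<bar>) * Hn / T9" using T9 h by (intro divide_left_mono) auto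
    finally show ?thesis by (simp add: mult.commute)
  qed
  have t5: "\<bar>Var / mb\<bar> \<le> Hn\<^sup>2 / (b * T9)"
  proof -
    have "\<bar>Var / mb\<bar> = Var / mb" using Var mb by simp
    also have "\<dots> \<le> (Hn\<^sup>2 / b) / mb" using Var mb by (intro divide_right_mono) auto
    also have "\<dots> \<le> (Hn\<^sup>2 / b) / T9" using T9 b by (intro divide_left_mono) auto
    finally show ?thesis by simp
  qed
  have "((kap - 1) * dm + tau * (mt - mb) + XS * h + (v - h) * h - Var) / mb
      = (kap - 1) * dm / mb + tau * (mt - mb) / mb + XS * h / mb + (v - h) * h / mb - Var / mb"
    by (simp add: diff_divide_distrib add_divide_distrib)
  hence "\<bar>((kap - 1) * dm + tau * (mt - mb) + XS * h + (v - h) * h - Var) / mb\<bar>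
     \<le> \<bar>(kap - 1) * dm / mb\<bar> + \<bar>tau * (mt - mb) / mb\<bar> + \<bar>XS * h / mb\<bar> + \<bar>(v - h) * h / mb\<bar> + \<bar>Var / mb\<bar>"
    by (simp only: abs5)
  thus ?thesis using t1 t2 t3 t4 t5 by linarith
qed

lemma C3_scalar:
  fixes mb T9 kap e dm XS v y N eps :: real
  assumes T9: "0 < T9" "T9 \<le> mb" and kap: "\<bar>kap - 1\<bar> \<le> 3 * e" and e: "e < 1/10000"
    and dm: "\<bar>dm\<bar> \<le> 97/100 * eps * T9" and XS: "\<bar>XS\<bar> \<le> 2 * e * sqrt mb"
    and v: "\<bar>v\<bar> \<le> N" and y: "\<bar>y\<bar> \<le> 11/10 * N" and N: "N\<^sup>2 \<le> eps\<^sup>2 * T9"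
    and eps: "0 < eps" "eps < 1/10000"
  shows "\<bar>(kap * dm + XS * y + (v - y) * y) / mb\<bar> \<le> 6 * eps"
proof -
  have mb: "0 < mb" using T9 by linarith
  have e0: "0 \<le> e" using kap by linarith
  have N0: "0 \<le> N" using v by linarith
  have t1: "\<bar>kap * dm / mb\<bar> \<le> 2 * eps"
  proof -
    have k: "\<bar>kap\<bar> \<le> 2" using kap e by linarith
    have "\<bar>kap * dm / mb\<bar> = \<bar>kap\<bar> * \<bar>dm\<bar> / mb" using mb by (simp add: abs_mult)
    also have "\<dots> \<le> 2 * (97/100 * eps * T9) / mb" using k dm mb by (intro divide_right_mono mult_mono) auto
    also have "\<dots> \<le> 2 * (97/100 * eps * T9) / T9" using T9 eps by (intro divide_left_mono) auto
    also have "\<dots> \<le> 2 * eps" using T9 eps by simp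
    finally show ?thesis .
  qed
  have NT: "N \<le> eps * sqrt T9"
  proof -
    have "N = sqrt (N\<^sup>2)" using N0 by simp
    also have "\<dots> \<le> sqrt (eps\<^sup>2 * T9)" using N by (rule real_sqrt_le_mono)
    also have "\<dots> = eps * sqrt T9" using eps by (simp add: real_sqrt_mult)
    finally show ?thesis .
  qed
  have t2: "\<bar>XS * y / mb\<bar> \<le> eps"
  proof -
    have sm: "sqrt T9 \<le> sqrt mb" using T9 by simp
    have sT: "0 < sqrt T9" using T9 by simp
    have "\<bar>XS * y / mb\<bar> = \<bar>XS\<bar> * \<bar>y\<bar> / mb" using mb by (simp add: abs_mult)
    also have "\<dots> \<le> (2 * e * sqrt mb) * (11/10 * N) / mb" using XS y mb by (intro divide_right_mono mult_mono) auto
    also have "\<dots> = (22/10 * e * N) / sqrt mb" using mb by (simp add: field_simps)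
    also have "\<dots> \<le> (22/10 * e * N) / sqrt T9" using sm sT e0 N0 by (intro divide_left_mono) auto
    also have "\<dots> \<le> (22/10 * e * (eps * sqrt T9)) / sqrt T9" using NT e0 sT by (intro divide_right_mono mult_left_mono) auto
    also have "\<dots> = 22/10 * e * eps" using sT by simp
    also have "\<dots> \<le> eps" using e eps by (simp add: mult_le_cancel_right1)
    finally show ?thesis .
  qed
  have t3: "\<bar>(v - y) * y / mb\<bar> \<le> eps"
  proof -
    have "\<bar>(v - y) * y / mb\<bar> = \<bar>v - y\<bar> * \<bar>y\<bar> / mb" using mb by (simp add: abs_mult)
    also have "\<dots> \<le> (21/10 * N) * (11/10 * N) / mb"
    proof -
      have "\<bar>v - y\<bar> \<le> 21/10 * N" using v y abs_triangle_ineq4[of v y] by linarith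
      thus ?thesis using y mb N0 by (intro divide_right_mono mult_mono) auto
    qed
    also have "\<dots> \<le> (21/10 * N) * (11/10 * N) / T9" using T9 N0 by (intro divide_left_mono) auto
    also have "\<dots> = 231/100 * N\<^sup>2 / T9" by (simp add: power2_eq_square)
    also have "\<dots> \<le> 231/100 * (eps\<^sup>2 * T9) / T9" using N T9 by (intro divide_right_mono) auto
    also have "\<dots> = 231/100 * eps\<^sup>2" using T9 by simp
    also have "\<dots> \<le> eps" using eps by (simp add: power2_eq_square)
    finally show ?thesis .
  qed
  have "(kap * dm + XS * y + (v - y) * y) / mb = kap * dm / mb + XS * y / mb + (v - y) * y / mb"
    by (simp add: add_divide_distrib)
  hence "\<bar>(kap * dm + XS * y + (v - y) * y) / mb\<bar> \<le> \<bar>kap * dm / mb\<bar> + \<bar>XS * y / mb\<bar> + \<bar>(v - y) * y / mb\<bar>"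
    by (simp only: abs3)
  thus ?thesis using t1 t2 t3 eps by linarith
qed

lemma V_scalar:
  fixes mb T9 XS v h Var N eps e b L Q :: real
  assumes T9: "0 < T9" "T9 \<le> mb" and XS: "\<bar>XS\<bar> \<le> 2 * e * sqrt mb" and e0: "0 \<le> e"
    and v: "\<bar>v\<bar> \<le> N" and h: "\<bar>h\<bar> \<le> N" and Var: "0 \<le> Var" "Var \<le> N\<^sup>2 / b"
    and N: "N\<^sup>2 \<le> eps\<^sup>2 * T9" and b: "1 \<le> b" and L: "L\<^sup>2 \<le> b / 1000"
    and Q: "0 \<le> Q" "Q \<le> 25400 * (N\<^sup>2 / b)\<^sup>2 * L\<^sup>2"
  shows "2 * ((XS + v) / mb + 2 * (- 1 / mb) * h)\<^sup>2 * Var + 2 * (- 1 / mb)\<^sup>2 * (Var\<^sup>2 + Q)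
     \<le> 16 * e\<^sup>2 * eps\<^sup>2 / b + 320 * eps ^ 4 / b"
proof -
  have mb: "0 < mb" using T9 by linarith
  have N0: "0 \<le> N" using v by linarith
  define u where "u = N\<^sup>2 / mb"
  have u0: "0 \<le> u" unfolding u_def using mb by simp
  have Nu: "N\<^sup>2 = u * mb" unfolding u_def using mb by simp
  have ue: "u \<le> eps\<^sup>2"
  proof -
    have "N\<^sup>2 \<le> eps\<^sup>2 * mb" using N T9 by (meson mult_left_mono order_trans zero_le_power2)
    thus ?thesis unfolding u_def using mb by (simp add: divide_le_eq)
  qed
  define D where "D = XS + v - 2 * h"
  have e1: "(XS + v) / mb + 2 * (- 1 / mb) * h = D / mb" unfolding D_def using mb by (simp add: field_simps)
  have D2: "D\<^sup>2 \<le> mb * (8 * e\<^sup>2 + 18 * u)"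
  proof -
    have "D\<^sup>2 \<le> 2 * XS\<^sup>2 + 2 * (v - 2 * h)\<^sup>2"
      unfolding D_def using sum_squares_ge_zero[of "XS - (v - 2*h)" 0] by (simp add: power2_eq_square algebra_simps)
    also have "XS\<^sup>2 \<le> (2 * e * sqrt mb)\<^sup>2" using XS by (metis abs_ge_zero power2_abs power_mono)
    also have "(2 * e * sqrt mb)\<^sup>2 = 4 * e\<^sup>2 * mb" using mb by (simp add: power_mult_distrib)
    also have "(v - 2 * h)\<^sup>2 \<le> (3 * N)\<^sup>2"
    proof -
      have "\<bar>v - 2 * h\<bar> \<le> 3 * N" using v h by linarith
      thus ?thesis by (metis abs_ge_zero power2_abs power_mono)
    qed
    also have "(3 * N)\<^sup>2 = 9 * (u * mb)" unfolding Nu[symmetric] by (simp add: power_mult_distrib)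
    finally show ?thesis by (simp add: algebra_simps)
  qed
  have A: "2 * (D / mb)\<^sup>2 * Var \<le> 2 * (8 * e\<^sup>2 + 18 * u) * u / b"
  proof -
    have "(D / mb)\<^sup>2 = D\<^sup>2 / mb\<^sup>2" by (simp add: power_divide)
    also have "\<dots> \<le> mb * (8 * e\<^sup>2 + 18 * u) / mb\<^sup>2" using D2 by (intro divide_right_mono) auto
    also have "\<dots> = (8 * e\<^sup>2 + 18 * u) / mb" using mb by (simp add: power2_eq_square)
    finally have d: "(D / mb)\<^sup>2 \<le> (8 * e\<^sup>2 + 18 * u) / mb" .
    have V: "Var \<le> u * mb / b" using Var Nu by simp
    have "2 * (D / mb)\<^sup>2 * Var \<le> 2 * ((8 * e\<^sup>2 + 18 * u) / mb) * (u * mb / b)"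
      using d V Var u0 mb by (intro mult_mono) auto
    also have "\<dots> = 2 * (8 * e\<^sup>2 + 18 * u) * u / b" using mb b by (simp add: field_simps)
    finally show ?thesis .
  qed
  have B: "2 * (- 1 / mb)\<^sup>2 * (Var\<^sup>2 + Q) \<le> 2 * (264/10) * u\<^sup>2 / b"
  proof -
    have b0: "0 < b" using b by simp
    have V2: "Var\<^sup>2 \<le> (u * mb / b)\<^sup>2" using Var Nu by (intro power_mono) auto
    have "(u * mb / b)\<^sup>2 \<le> (u * mb)\<^sup>2 / b"
    proof -
      have "(u * mb / b)\<^sup>2 = (u * mb)\<^sup>2 / b / b" by (simp add: power_divide power2_eq_square)
      also have "\<dots> \<le> (u * mb)\<^sup>2 / b / 1" using b by (intro divide_left_mono) auto
      finally show ?thesis by simp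
    qed
    have Qb: "Q \<le> 254/10 * (u * mb)\<^sup>2 / b"
    proof -
      have "Q \<le> 25400 * ((u * mb)\<^sup>2 / b\<^sup>2) * L\<^sup>2" using Q Nu by (simp add: power_divide)
      also have "\<dots> \<le> 25400 * ((u * mb)\<^sup>2 / b\<^sup>2) * (b / 1000)" using L by (intro mult_left_mono) auto
      also have "\<dots> = 254/10 * (u * mb)\<^sup>2 / b" using b0 by (simp add: power2_eq_square field_simps)
      finally show ?thesis .
    qed
    have "Var\<^sup>2 + Q \<le> (u * mb)\<^sup>2 / b + 254/10 * (u * mb)\<^sup>2 / b" using V2 \<open>(u * mb / b)\<^sup>2 \<le> (u * mb)\<^sup>2 / b\<close> Qb by linarith
    also have "\<dots> = 264/10 * u\<^sup>2 * mb\<^sup>2 / b" by (simp add: power_mult_distrib field_simps)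
    finally have VQ: "Var\<^sup>2 + Q \<le> 264/10 * u\<^sup>2 * mb\<^sup>2 / b" .
    have "2 * (- 1 / mb)\<^sup>2 * (Var\<^sup>2 + Q) \<le> 2 * (- 1 / mb)\<^sup>2 * (264/10 * u\<^sup>2 * mb\<^sup>2 / b)"
      using VQ by (intro mult_left_mono) auto
    also have "\<dots> = 2 * (264/10) * u\<^sup>2 / b" using mb by (simp add: power2_eq_square field_simps)
    finally show ?thesis .
  qed
  have "2 * (8 * e\<^sup>2 + 18 * u) * u / b + 2 * (264/10) * u\<^sup>2 / b = (16 * e\<^sup>2 * u + 888/10 * u\<^sup>2) / b"
    using b by (simp add: power2_eq_square field_simps)
  also have "\<dots> \<le> (16 * e\<^sup>2 * eps\<^sup>2 + 320 * eps^4) / b"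
  proof (intro divide_right_mono)
    have "16 * e\<^sup>2 * u \<le> 16 * e\<^sup>2 * eps\<^sup>2" using ue by (intro mult_left_mono) auto
    moreover have "u\<^sup>2 \<le> (eps\<^sup>2)\<^sup>2" using ue u0 by (intro power_mono) auto
    hence h4: "u\<^sup>2 \<le> eps^4" by (simp add: power_mult[symmetric])
    have "0 \<le> u\<^sup>2" by simp
    hence "888/10 * u\<^sup>2 \<le> 320 * eps^4" using h4 by linarith
    ultimately show "16 * e\<^sup>2 * u + 888/10 * u\<^sup>2 \<le> 16 * e\<^sup>2 * eps\<^sup>2 + 320 * eps^4" by linarith
  qed (use b in simp)
  also have "\<dots> = 16 * e\<^sup>2 * eps\<^sup>2 / b + 320 * eps ^ 4 / b" by (simp add: add_divide_distrib)
  finally have fin: "2 * (8 * e\<^sup>2 + 18 * u) * u / b + 2 * (264/10) * u\<^sup>2 / b \<le> 16 * e\<^sup>2 * eps\<^sup>2 / b + 320 * eps ^ 4 / b" .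
  show ?thesis unfolding e1 using A B fin by linarith
qed

lemma main_lemma:
  fixes n d b :: nat and A :: "real mat" and eps eps_mp lam t :: real
    and xb sb wt mut :: "real vec" and M :: "'w measure" and R :: "'w \<Rightarrow> real mat"
  assumes H: "
    n \<ge> 2 \<and> d \<le> n \<and> full_row_rank d n A \<and>
    0 < eps \<and> eps < 1/10000 \<and> 0 < eps_mp \<and> eps_mp < 1/10000 \<and>
    lam > ln (real n) \<and> real b \<ge> 1000 * (ln (real n))\<^sup>2 \<and> t > 0 \<and>
    xb \<in> carrier_vec n \<and> sb \<in> carrier_vec n \<and> pos_vec xb \<and> pos_vec sb \<and>
    wt \<in> carrier_vec n \<and> mut \<in> carrier_vec n \<and> pos_vec wt \<and> pos_vec mut \<and>
    approx_vec mut eps_mp (vmul xb sb) \<and> approx_vec wt eps_mp (vdivide xb sb) \<and>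
    approx_scal (vmul xb sb) (1/10) t \<and>
    gradPhi lam (Matrix.vec n (\<lambda>i. mut $ i / t - 1)) \<noteq> 0\<^sub>v n \<and>
    sketch_hyps M b n R"
  shows "(let mub = vmul xb sb;
         mun = (\<lambda>\<omega>. mu_new n eps lam t A wt mut xb sb (R \<omega>));
         dtb = delta_t n eps t mub;
         dPhi = delta_Phi n eps lam t mut
     in
       norm2 (Matrix.vec n (\<lambda>i. integral\<^sup>L M (\<lambda>\<omega>.
           (mun \<omega> $ i - mub $ i - dtb $ i - dPhi $ i) / mub $ i)))
         \<le> 9 * eps_mp * eps + 4 * eps\<^sup>2 + 2 * eps\<^sup>2 * sqrt (real n) / real b
     \<and> measure M {\<omega> \<in> space M. \<forall>i<n.
           integral\<^sup>L M (\<lambda>\<omega>'. (mun \<omega>' $ i / mub $ i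
               - integral\<^sup>L M (\<lambda>\<omega>''. mun \<omega>'' $ i / mub $ i))\<^sup>2)
           \<le> 16 * eps_mp\<^sup>2 * eps\<^sup>2 / real b + 320 * eps ^ 4 / real b}
         \<ge> 1 - 1 / real n powr 1
     \<and> measure M {\<omega> \<in> space M. \<forall>i<n. \<bar>(mun \<omega> $ i - mub $ i) / mub $ i\<bar> \<le> 6 * eps}
         \<ge> 1 - 1 / real n powr 1
     \<and> norm2 (Matrix.vec n (\<lambda>i. integral\<^sup>L M (\<lambda>\<omega>. (mun \<omega> $ i - mub $ i) / mub $ i)))
         \<le> 6 * eps + 2 * eps\<^sup>2 * sqrt (real n) / real b)"
proof -
  have n2: "2 \<le> n" and fr: "full_row_rank d n A" and eps0: "0 < eps" and eps1: "eps < 1/10000"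
    and e0: "0 < eps_mp" and e1: "eps_mp < 1/10000" and bb: "real b \<ge> 1000 * (ln (real n))\<^sup>2"
    and t0: "t > 0" and xbC: "xb \<in> carrier_vec n" and sbC: "sb \<in> carrier_vec n"
    and xbP: "pos_vec xb" and sbP: "pos_vec sb" and wtC: "wt \<in> carrier_vec n" and mutC: "mut \<in> carrier_vec n"
    and wtP: "pos_vec wt" and mutP: "pos_vec mut"
    and apmu: "approx_vec mut eps_mp (vmul xb sb)" and apw: "approx_vec wt eps_mp (vdivide xb sb)"
    and apt: "approx_scal (vmul xb sb) (1/10) t"
    and gnz: "gradPhi lam (Matrix.vec n (\<lambda>i. mut $ i / t - 1)) \<noteq> 0\<^sub>v n"
    and SK: "sketch_hyps M b n R"
    using H by auto
  define e where "e = eps_mp"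
  define T9 where "T9 = 9/10 * t"
  have T9: "0 < T9" unfolding T9_def using t0 by simp
  have dxb: "dim_vec xb = n" and dsb: "dim_vec sb = n" and dwt: "dim_vec wt = n" and dmut: "dim_vec mut = n"
    using xbC sbC wtC mutC by auto
  have xbp: "\<And>i. i < n \<Longrightarrow> 0 < xb $ i" using xbP dxb unfolding pos_vec_def by auto
  have sbp: "\<And>i. i < n \<Longrightarrow> 0 < sb $ i" using sbP dsb unfolding pos_vec_def by auto
  have wtp: "\<And>i. i < n \<Longrightarrow> 0 < wt $ i" using wtP dwt unfolding pos_vec_def by auto
  have mtp: "\<And>i. i < n \<Longrightarrow> 0 < mut $ i" using mutP dmut unfolding pos_vec_def by auto
  have mub_i: "\<And>i. i < n \<Longrightarrow> vmul xb sb $ i = xb $ i * sb $ i" using dxb by (simp add: vmul_def)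
  have mt1: "\<And>i. i < n \<Longrightarrow> (1 - e) * (xb $ i * sb $ i) \<le> mut $ i"
   and mt2: "\<And>i. i < n \<Longrightarrow> mut $ i \<le> (1 + e) * (xb $ i * sb $ i)"
    using apmu dxb unfolding approx_vec_def e_def by (auto simp: vmul_def)
  have wt1: "\<And>i. i < n \<Longrightarrow> (1 - e) * (xb $ i / sb $ i) \<le> wt $ i"
   and wt2: "\<And>i. i < n \<Longrightarrow> wt $ i \<le> (1 + e) * (xb $ i / sb $ i)"
    using apw dxb unfolding approx_vec_def e_def by (auto simp: vdivide_def)
  have mb1: "\<And>i. i < n \<Longrightarrow> T9 \<le> xb $ i * sb $ i"
   and mb2: "\<And>i. i < n \<Longrightarrow> xb $ i * sb $ i \<le> 11/10 * t"
    using apt dxb unfolding approx_scal_def T9_def by (auto simp: vmul_def)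

  have nr: "2 \<le> real n" using n2 by simp
  have sqn: "1 \<le> sqrt (real n)" using nr by simp
  define tn where "tn = tnew n eps t"
  define tau where "tau = tn / t - 1"
  have tau_eq: "tau = - (eps / (3 * sqrt (real n)))"
    unfolding tau_def tn_def tnew_def using t0 by simp
  have "eps < 3 * sqrt (real n)" using sqn eps1 by linarith
  hence epsq: "eps / (3 * sqrt (real n)) < 1" using sqn by (simp add: divide_less_eq)
  have tn_pos: "0 < tn" unfolding tn_def tnew_def using epsq t0 by simp
  have tn_le: "tn \<le> t" unfolding tn_def tnew_def using eps0 sqn t0 by simp
  have abs_tau: "\<bar>tau\<bar> = eps / (3 * sqrt (real n))" unfolding tau_eq using eps0 by simp
  define gv where "gv = gradPhi lam (Matrix.vec n (\<lambda>i. mut $ i / t - 1))"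
  have gvC: "gv \<in> carrier_vec n" unfolding gv_def gradPhi_def by simp
  have ng: "0 < norm2 gv"
  proof (rule ccontr)
    assume "\<not> 0 < norm2 gv"
    hence "norm2 gv = 0" using norm2_nonneg[of gv] by simp
    hence "L2_set (\<lambda>i. gv $ i) {..<n} = 0" using norm2_carrier[OF gvC] by simp
    hence "\<forall>i\<in>{..<n}. gv $ i = 0" using L2_set_eq_0_iff[of "{..<n}"] by simp
    hence "gv = 0\<^sub>v n" using gvC by (intro eq_vecI) auto
    thus False using gnz unfolding gv_def by simp
  qed
  define dPhi where "dPhi = delta_Phi n eps lam t mut"
  have dPhi_eq: "dPhi = (- (eps / 2) * tn / norm2 gv) \<cdot>\<^sub>v gv"
    unfolding dPhi_def delta_Phi_def Let_def gv_def dmut tn_def ..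
  have dPhiC: "dPhi \<in> carrier_vec n" unfolding dPhi_eq using gvC by simp
  have ndPhi: "norm2 dPhi = eps / 2 * tn"
    unfolding dPhi_eq norm2_smult using ng eps0 tn_pos by (simp add: abs_mult abs_divide)
  define dtt where "dtt = delta_t n eps t mut"
  have dttC: "dtt \<in> carrier_vec n" unfolding dtt_def delta_t_def using mutC by simp
  have dtt_i: "\<And>i. i < n \<Longrightarrow> dtt $ i = tau * mut $ i"
    unfolding dtt_def delta_t_def tau_def tn_def using dmut by simp
  define dmu where "dmu = delta_mu n eps lam t mut"
  have dmu_eq: "dmu = dtt + dPhi" unfolding dmu_def delta_mu_def dtt_def dPhi_def ..
  have dmuC: "dmu \<in> carrier_vec n" unfolding dmu_eq using dttC dPhiC by simp
  have dmu_i: "\<And>i. i < n \<Longrightarrow> dmu $ i = tau * mut $ i + dPhi $ i"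
    unfolding dmu_eq using dtt_i dPhiC by simp
  have ndtt: "norm2 dtt \<le> eps * (1 + e) * (11/10 * t) / 3"
  proof -
    have "norm2 dtt = L2_set (\<lambda>i. tau * mut $ i) {..<n}" unfolding norm2_carrier[OF dttC]
      by (rule L2_set_cong) (auto simp: dtt_i)
    also have "\<dots> \<le> sqrt (real (card {..<n})) * (eps / (3 * sqrt (real n)) * ((1 + e) * (11/10 * t)))"
    proof (rule L2_const_bound)
      fix i assume "i \<in> {..<n}" hence i: "i < n" by simp
      have "mut $ i \<le> (1 + e) * (11/10 * t)"
        using mt2[OF i] mb2[OF i] e0 unfolding e_def by (smt (verit) mult_left_mono)
      hence "\<bar>mut $ i\<bar> \<le> (1 + e) * (11/10 * t)" using mtp[OF i] by simp
      thus "\<bar>tau * mut $ i\<bar> \<le> eps / (3 * sqrt (real n)) * ((1 + e) * (11/10 * t))"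
        unfolding abs_mult abs_tau using eps0 sqn by (intro mult_left_mono) auto
    qed
    also have "\<dots> = eps * (1 + e) * (11/10 * t) / 3" using sqn by simp
    finally show ?thesis .
  qed
  have ndmu: "norm2 dmu \<le> 97/100 * eps * T9"
  proof -
    have "norm2 dmu = L2_set (\<lambda>i. dtt $ i + dPhi $ i) {..<n}" unfolding norm2_carrier[OF dmuC]
      by (rule L2_set_cong) (use dmu_eq dttC dPhiC in auto)
    also have "\<dots> \<le> L2_set (\<lambda>i. dtt $ i) {..<n} + L2_set (\<lambda>i. dPhi $ i) {..<n}" by (rule L2_set_triangle_ineq)
    also have "\<dots> = norm2 dtt + norm2 dPhi" using norm2_carrier[OF dttC] norm2_carrier[OF dPhiC] by simp
    also have "\<dots> \<le> eps * (1 + e) * (11/10 * t) / 3 + eps / 2 * t"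
    proof -
      have "eps / 2 * tn \<le> eps / 2 * t" using tn_le eps0 by (intro mult_left_mono) auto
      thus ?thesis using ndtt ndPhi by linarith
    qed
    also have "\<dots> \<le> 97/100 * eps * T9"
    proof -
      have "eps * (1 + e) * (11/10 * t) / 3 + eps / 2 * t = (eps * t) * ((1 + e) * (11/30) + 1/2)" by (simp add: algebra_simps)
      also have "\<dots> \<le> (eps * t) * (873/1000)"
        using e1 eps0 t0 unfolding e_def by (intro mult_left_mono) auto
      also have "\<dots> = 97/100 * eps * T9" unfolding T9_def by simp
      finally show ?thesis .
    qed
    finally show ?thesis .
  qed

  define xt where "xt = xtil wt mut"
  define st where "st = stil wt mut"
  define qv where "qv = vinv (vsqrt (vmul xt st))"
  have dxt: "dim_vec xt = n" unfolding xt_def xtil_def using dwt by (simp add: vmul_def)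
  have dst: "dim_vec st = n" unfolding st_def stil_def using dmut by (simp add: vdivide_def)
  have dqv: "dim_vec qv = n" unfolding qv_def using dxt by (simp add: vinv_def vmul_def)
  have xt_i: "\<And>i. i < n \<Longrightarrow> xt $ i = sqrt (wt $ i * mut $ i)"
    unfolding xt_def xtil_def using dwt by (simp add: vmul_def vsqrt_def)
  have st_i: "\<And>i. i < n \<Longrightarrow> st $ i = sqrt (mut $ i / wt $ i)"
    unfolding st_def stil_def using dmut by (simp add: vdivide_def vsqrt_def)
  have xs_i: "\<And>i. i < n \<Longrightarrow> xt $ i * st $ i = mut $ i"
  proof -
    fix i assume i: "i < n"
    have "xt $ i * st $ i = sqrt (wt $ i * mut $ i * (mut $ i / wt $ i))"
      unfolding xt_i[OF i] st_i[OF i] by (rule real_sqrt_mult[symmetric])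
    also have "wt $ i * mut $ i * (mut $ i / wt $ i) = (mut $ i)\<^sup>2" using wtp[OF i] by (simp add: field_simps power2_eq_square)
    also have "sqrt ((mut $ i)\<^sup>2) = mut $ i" using mtp[OF i] by simp
    finally show "xt $ i * st $ i = mut $ i" .
  qed
  have qv_i: "\<And>i. i < n \<Longrightarrow> qv $ i = 1 / sqrt (mut $ i)"
    unfolding qv_def using dxt xs_i by (simp add: vinv_def vsqrt_def vmul_def)
  have xq_i: "xt $ i * qv $ i = sqrt (wt $ i)" if i: "i < n" for i
    using xt_i[OF i] qv_i[OF i] mtp[OF i] wtp[OF i] by (simp add: real_sqrt_mult)
  have sq_i: "st $ i * qv $ i = 1 / sqrt (wt $ i)" if i: "i < n" for i
    using st_i[OF i] qv_i[OF i] mtp[OF i] wtp[OF i] by (simp add: real_sqrt_divide)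
  define v where "v = vdiag qv *\<^sub>v dmu"
  have vC: "v \<in> carrier_vec n" unfolding v_def using dmuC dqv by (metis mult_mat_vec_carrier vdiag_carrier')
  have v_i: "\<And>i. i < n \<Longrightarrow> v $ i = dmu $ i / sqrt (mut $ i)"
    unfolding v_def using dmuC dqv qv_i by (simp add: vdiag_mult_vec)
  define N where "N = norm2 v"
  have N0: "0 \<le> N" unfolding N_def by (rule norm2_nonneg)
  have NN: "N\<^sup>2 \<le> eps\<^sup>2 * T9"
  proof -
    have "N\<^sup>2 = (\<Sum>i<n. (v $ i)\<^sup>2)" unfolding N_def norm2_def using vC by (simp add: sum_nonneg)
    also have "\<dots> \<le> (\<Sum>i<n. (dmu $ i)\<^sup>2 / ((1 - e) * T9))"
    proof (intro sum_mono)
      fix i assume "i \<in> {..<n}" hence i: "i < n" by simp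
      have "(1 - e) * T9 \<le> (1 - e) * (xb $ i * sb $ i)" using mb1[OF i] e1 unfolding e_def
        by (intro mult_left_mono) auto
      also have "\<dots> \<le> mut $ i" by (rule mt1[OF i])
      finally have le: "(1 - e) * T9 \<le> mut $ i" .
      have pos: "0 < (1 - e) * T9" using e1 T9 unfolding e_def by simp
      have "(v $ i)\<^sup>2 = (dmu $ i)\<^sup>2 / mut $ i" using v_i[OF i] mtp[OF i] by (simp add: power_divide)
      also have "\<dots> \<le> (dmu $ i)\<^sup>2 / ((1 - e) * T9)" using le pos by (intro divide_left_mono) auto
      finally show "(v $ i)\<^sup>2 \<le> (dmu $ i)\<^sup>2 / ((1 - e) * T9)" .
    qed
    also have "\<dots> = (norm2 dmu)\<^sup>2 / ((1 - e) * T9)"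
      unfolding norm2_def using dmuC by (simp add: sum_divide_distrib sum_nonneg)
    also have "\<dots> \<le> (97/100 * eps * T9)\<^sup>2 / ((1 - e) * T9)"
      using ndmu norm2_nonneg[of dmu] e1 T9 unfolding e_def
      by (intro divide_right_mono power_mono) auto
    also have "\<dots> \<le> eps\<^sup>2 * T9"
    proof -
      have pos: "0 < (1 - e) * T9" using e1 T9 unfolding e_def by simp
      have "(97/100 * eps * T9)\<^sup>2 = (9409/10000) * (eps\<^sup>2 * T9) * T9" by (simp add: power2_eq_square)
      also have "\<dots> \<le> (1 - e) * (eps\<^sup>2 * T9) * T9" using e1 T9 unfolding e_def
        by (intro mult_right_mono) auto
      finally show ?thesis using pos by (simp add: divide_le_eq mult_ac)
    qed
    finally show ?thesis .
  qed
  have Nle: "N \<le> eps * sqrt T9"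
  proof -
    have "N = sqrt (N\<^sup>2)" using N0 by simp
    also have "\<dots> \<le> sqrt (eps\<^sup>2 * T9)" using NN by (rule real_sqrt_le_mono)
    also have "\<dots> = eps * sqrt T9" using eps0 by (simp add: real_sqrt_mult)
    finally show ?thesis .
  qed
  define P where "P = projP A wt"
  have PC: "P \<in> carrier_mat n n" unfolding P_def using proj_props(1)[OF fr wtC wtP] .
  define h where "h = P *\<^sub>v v"
  have hC: "h \<in> carrier_vec n" unfolding h_def using PC vC by simp
  define Hn where "Hn = norm2 h"
  have Hn0: "0 \<le> Hn" unfolding Hn_def by (rule norm2_nonneg)
  have HnN: "Hn \<le> N" unfolding Hn_def N_def h_def P_def using proj_props(2)[OF fr wtC wtP vC] .
  have h_le: "\<And>i. i < n \<Longrightarrow> \<bar>h $ i\<bar> \<le> Hn"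
    unfolding Hn_def norm2_carrier[OF hC] by (rule L2_comp) auto
  have v_le: "\<And>i. i < n \<Longrightarrow> \<bar>v $ i\<bar> \<le> N"
    unfolding N_def norm2_carrier[OF vC] by (rule L2_comp) auto
  have dmu_le: "\<And>i. i < n \<Longrightarrow> \<bar>dmu $ i\<bar> \<le> norm2 dmu"
    unfolding norm2_carrier[OF dmuC] by (rule L2_comp) auto
  define Y where "Y = (\<lambda>i \<omega>. (transpose_mat (R \<omega>) * R \<omega> *\<^sub>v h) $ i)"
  have PS: "prob_space M" and Rcar: "\<And>\<omega>. \<omega> \<in> space M \<Longrightarrow> R \<omega> \<in> carrier_mat b n"
    using SK unfolding sketch_hyps_def by auto
  interpret prob_space M by (rule PS)
  have Yint: "\<And>i. i < n \<Longrightarrow> integrable M (Y i)"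
   and YE: "\<And>i. i < n \<Longrightarrow> integral\<^sup>L M (Y i) = h $ i"
   and Y2int: "\<And>i. i < n \<Longrightarrow> integrable M (\<lambda>\<omega>. (Y i \<omega>)\<^sup>2)"
   and Y2E: "\<And>i. i < n \<Longrightarrow> integral\<^sup>L M (\<lambda>\<omega>. (Y i \<omega>)\<^sup>2) \<le> (h $ i)\<^sup>2 + Hn\<^sup>2 / real b"
   and Ytail: "\<And>i \<delta>. i < n \<Longrightarrow> 0 < \<delta> \<Longrightarrow> \<delta> < 1 \<Longrightarrow>
        measure M {\<omega> \<in> space M. \<bar>Y i \<omega> - h $ i\<bar> > Hn * ln (real n / \<delta>) / sqrt (real b)} \<le> \<delta>"
    using SK hC unfolding sketch_hyps_def Y_def Hn_def by auto
  have Ym: "\<And>i. i < n \<Longrightarrow> Y i \<in> borel_measurable M" using Yint by auto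
  define C0 where "C0 = (\<lambda>i. xb $ i * sb $ i + sqrt (wt $ i) * v $ i * sb $ i)"
  define C1 where "C1 = (\<lambda>i. xb $ i / sqrt (wt $ i) + v $ i - sqrt (wt $ i) * sb $ i)"
  have mun_i: "\<And>i \<omega>. i < n \<Longrightarrow> \<omega> \<in> space M \<Longrightarrow>
      mu_new n eps lam t A wt mut xb sb (R \<omega>) $ i = C0 i + C1 i * Y i \<omega> + (-1) * (Y i \<omega>)\<^sup>2"
  proof -
    fix i \<omega> assume i: "i < n" and \<omega>: "\<omega> \<in> space M"
    have Rw: "R \<omega> \<in> carrier_mat b n" using Rcar[OF \<omega>] .
    define hdx where "hdx = hat_dx n eps lam t A wt mut (R \<omega>)"
    define hds where "hds = hat_ds n eps lam t A wt mut (R \<omega>)"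
    have hdx_eq: "hdx = vdiag xt * vdiag qv * (1\<^sub>m n - transpose_mat (R \<omega>) * R \<omega> * P) * vdiag qv *\<^sub>v dmu"
      unfolding hdx_def hat_dx_def Let_def xt_def st_def qv_def P_def dmu_def ..
    have hds_eq: "hds = vdiag st * vdiag qv * transpose_mat (R \<omega>) * R \<omega> * P * vdiag qv *\<^sub>v dmu"
      unfolding hds_def hat_ds_def Let_def xt_def st_def qv_def P_def dmu_def ..
    have Yw: "Y i \<omega> = ((transpose_mat (R \<omega>) * R \<omega>) *\<^sub>v (P *\<^sub>v (vdiag qv *\<^sub>v dmu))) $ i"
      unfolding Y_def h_def v_def ..
    have hdx_i: "hdx $ i = sqrt (wt $ i) * (v $ i - Y i \<omega>)"
      unfolding hdx_eq glue(1)[OF dxt dst dqv Rw PC dmuC i] Yw v_def xq_i[OF i] ..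
    have hds_i: "hds $ i = Y i \<omega> / sqrt (wt $ i)"
      unfolding hds_eq glue(2)[OF dxt dst dqv Rw PC dmuC i] Yw sq_i[OF i] by simp
    have dhdx: "dim_vec hdx = n" unfolding hdx_eq using dxt by (simp add: vdiag_def mat_diag_def)
    have dhds: "dim_vec hds = n" unfolding hds_eq using dst by (simp add: vdiag_def mat_diag_def)
    have "mu_new n eps lam t A wt mut xb sb (R \<omega>) $ i = (xb $ i + hdx $ i) * (sb $ i + hds $ i)"
      unfolding mu_new_def hdx_def[symmetric] hds_def[symmetric] using i dhdx dhds dxb dsb
      by (simp add: vmul_def)
    also have "\<dots> = C0 i + C1 i * Y i \<omega> + (-1) * (Y i \<omega>)\<^sup>2"
      unfolding hdx_i hds_i C0_def C1_def using wtp[OF i]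
      by (simp add: field_simps power2_eq_square)
    finally show "mu_new n eps lam t A wt mut xb sb (R \<omega>) $ i = C0 i + C1 i * Y i \<omega> + (-1) * (Y i \<omega>)\<^sup>2" .
  qed
  have b_ge: "1000 * (ln (real n))\<^sup>2 \<le> real b" using bb .
  have L23: "2/3 \<le> ln (real n)" using ln2_ge_two_thirds nr by (smt (verit) ln_mono zero_less_numeral)
  have b1: "1 \<le> real b"
  proof -
    have "(2/3)\<^sup>2 \<le> (ln (real n))\<^sup>2" using L23 by (intro power_mono) auto
    thus ?thesis using b_ge by (simp add: power2_eq_square)
  qed
  have b0: "0 < real b" using b1 by simp
  define mb where "mb = (\<lambda>i. xb $ i * sb $ i)"
  define kap where "kap = (\<lambda>i. sb $ i * sqrt (wt $ i) / sqrt (mut $ i))"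
  define XS where "XS = (\<lambda>i. xb $ i / sqrt (wt $ i) - sb $ i * sqrt (wt $ i))"
  define EY2 where "EY2 = (\<lambda>i. integral\<^sup>L M (\<lambda>\<omega>. (Y i \<omega>)\<^sup>2))"
  define Var where "Var = (\<lambda>i. EY2 i - (h $ i)\<^sup>2)"
  have K1: "\<bar>kap i - 1\<bar> \<le> 3 * e" and K2: "\<bar>XS i\<bar> \<le> 2 * e * sqrt (mb i)" if i: "i < n" for i
    using coord_scal[OF xbp[OF i] sbp[OF i] wtp[OF i] mtp[OF i] _ _ wt1[OF i] wt2[OF i] mt1[OF i] mt2[OF i]] e0 e1
    unfolding kap_def XS_def mb_def e_def by auto
  have C0eq: "C0 i - mb i = kap i * dmu $ i" if i: "i < n" for i
    unfolding C0_def mb_def kap_def v_i[OF i] by (simp add: field_simps)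
  have C1eq: "C1 i = XS i + v $ i" if i: "i < n" for i
    unfolding C1_def XS_def by (simp add: algebra_simps)
  have Var0: "0 \<le> Var i" if i: "i < n" for i
    using var_basic(3)[OF PS Yint[OF i] Y2int[OF i]] YE[OF i] unfolding Var_def EY2_def by simp
  have VarB: "Var i \<le> Hn\<^sup>2 / real b" if i: "i < n" for i
    using Y2E[OF i] unfolding Var_def EY2_def by simp
  have mbT: "T9 \<le> mb i" if i: "i < n" for i unfolding mb_def using mb1[OF i] .
  have mbp: "0 < mb i" if i: "i < n" for i using mbT[OF i] T9 by linarith
  have mtmb: "\<bar>mut $ i - mb i\<bar> \<le> e * mb i" if i: "i < n" for i
    using mt1[OF i] mt2[OF i] unfolding mb_def by (simp add: abs_le_iff algebra_simps)
  define E1v where "E1v = (\<lambda>i. ((kap i - 1) * dmu $ i + tau * (mut $ i - mb i) + XS i * h $ i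
      + (v $ i - h $ i) * h $ i - Var i) / mb i)"
  have dtb_i: "delta_t n eps t (vmul xb sb) $ i = tau * mb i" if i: "i < n" for i
    unfolding delta_t_def tau_def tn_def mb_def using i dxb by (simp add: vmul_def)
  have mub_i': "vmul xb sb $ i = mb i" if i: "i < n" for i unfolding mb_def using mub_i[OF i] .
  have Iq: "integral\<^sup>L M (\<lambda>\<omega>. c0 + c1 * Y i \<omega> + c2 * (Y i \<omega>)\<^sup>2) = c0 + c1 * h $ i + c2 * EY2 i"
    if i: "i < n" for i c0 c1 c2
    using quad_int(2)[OF PS Yint[OF i] Y2int[OF i]] YE[OF i] unfolding EY2_def by simp
  have I1: "integral\<^sup>L M (\<lambda>\<omega>. (mu_new n eps lam t A wt mut xb sb (R \<omega>) $ i - vmul xb sb $ i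
      - delta_t n eps t (vmul xb sb) $ i - delta_Phi n eps lam t mut $ i) / vmul xb sb $ i) = E1v i"
    if i: "i < n" for i
  proof -
    have "integral\<^sup>L M (\<lambda>\<omega>. (mu_new n eps lam t A wt mut xb sb (R \<omega>) $ i - vmul xb sb $ i
      - delta_t n eps t (vmul xb sb) $ i - delta_Phi n eps lam t mut $ i) / vmul xb sb $ i)
      = integral\<^sup>L M (\<lambda>\<omega>. (C0 i - mb i - tau * mb i - dPhi $ i) / mb i + (C1 i / mb i) * Y i \<omega> + (-1 / mb i) * (Y i \<omega>)\<^sup>2)"
      by (rule Bochner_Integration.integral_cong[OF refl])
         (simp add: mun_i[OF i] mub_i'[OF i] dtb_i[OF i] dPhi_def[symmetric] diff_divide_distrib add_divide_distrib)
    also have "\<dots> = (C0 i - mb i - tau * mb i - dPhi $ i) / mb i + (C1 i / mb i) * h $ i + (-1 / mb i) * EY2 i"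
      by (rule Iq[OF i])
    also have "\<dots> = E1v i"
      unfolding E1v_def Var_def C1eq[OF i] using C0eq[OF i] dmu_i[OF i] mbp[OF i]
      by (simp add: field_simps power2_eq_square)
    finally show ?thesis .
  qed
  have sT9: "0 < sqrt T9" using T9 by simp
  have NT: "N \<le> eps * sqrt T9" using Nle .
  have HnT: "Hn \<le> eps * sqrt T9" using HnN NT by linarith
  have card_n: "card {..<n} = n" by simp
  have B1: "L2_set E1v {..<n} \<le> 9 * e * eps + 4 * eps\<^sup>2 + 2 * eps\<^sup>2 * sqrt (real n) / real b"
  proof -
    have "L2_set E1v {..<n} \<le> L2_set (\<lambda>i. 3 * e / T9 * \<bar>dmu $ i\<bar> + \<bar>tau\<bar> * e + 2 * e / sqrt T9 * \<bar>h $ i\<bar>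
        + Hn / T9 * (\<bar>v $ i\<bar> + \<bar>h $ i\<bar>) + Hn\<^sup>2 / (real b * T9)) {..<n}"
    proof (rule L2_abs_mono)
      fix i assume "i \<in> {..<n}" hence i: "i < n" by simp
      show "\<bar>E1v i\<bar> \<le> 3 * e / T9 * \<bar>dmu $ i\<bar> + \<bar>tau\<bar> * e + 2 * e / sqrt T9 * \<bar>h $ i\<bar>
        + Hn / T9 * (\<bar>v $ i\<bar> + \<bar>h $ i\<bar>) + Hn\<^sup>2 / (real b * T9)"
        unfolding E1v_def
        by (rule E1_scalar[OF T9 mbT[OF i] K1[OF i] mtmb[OF i] K2[OF i] Var0[OF i] VarB[OF i] h_le[OF i] b0])
    qed
    also have "\<dots> \<le> L2_set (\<lambda>i. 3 * e / T9 * \<bar>dmu $ i\<bar>) {..<n} + L2_set (\<lambda>i. \<bar>tau\<bar> * e) {..<n}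
        + L2_set (\<lambda>i. 2 * e / sqrt T9 * \<bar>h $ i\<bar>) {..<n} + L2_set (\<lambda>i. Hn / T9 * (\<bar>v $ i\<bar> + \<bar>h $ i\<bar>)) {..<n}
        + L2_set (\<lambda>i. Hn\<^sup>2 / (real b * T9)) {..<n}"
      by (rule L2_sum5)
    also have "L2_set (\<lambda>i. 3 * e / T9 * \<bar>dmu $ i\<bar>) {..<n} = 3 * e / T9 * norm2 dmu"
      unfolding norm2_carrier[OF dmuC] using e0 T9 unfolding e_def by (intro L2_scale_abs) auto
    also have "L2_set (\<lambda>i. \<bar>tau\<bar> * e) {..<n} = sqrt (real n) * (\<bar>tau\<bar> * e)"
      using e0 unfolding e_def by (simp add: L2_set_constant)
    also have "L2_set (\<lambda>i. 2 * e / sqrt T9 * \<bar>h $ i\<bar>) {..<n} = 2 * e / sqrt T9 * Hn"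
      unfolding Hn_def norm2_carrier[OF hC] using e0 sT9 unfolding e_def by (intro L2_scale_abs) auto
    also have "L2_set (\<lambda>i. Hn / T9 * (\<bar>v $ i\<bar> + \<bar>h $ i\<bar>)) {..<n} \<le> Hn / T9 * (N + Hn)"
    proof -
      have tri: "L2_set (\<lambda>i. \<bar>v $ i\<bar> + \<bar>h $ i\<bar>) {..<n} \<le> N + Hn"
      proof -
        have "L2_set (\<lambda>i. \<bar>v $ i\<bar> + \<bar>h $ i\<bar>) {..<n} \<le> L2_set (\<lambda>i. \<bar>v $ i\<bar>) {..<n} + L2_set (\<lambda>i. \<bar>h $ i\<bar>) {..<n}"
          by (rule L2_set_triangle_ineq)
        also have "L2_set (\<lambda>i. \<bar>v $ i\<bar>) {..<n} = N" unfolding N_def norm2_carrier[OF vC] L2_abs_eq ..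
        also have "L2_set (\<lambda>i. \<bar>h $ i\<bar>) {..<n} = Hn" unfolding Hn_def norm2_carrier[OF hC] L2_abs_eq ..
        finally show ?thesis .
      qed
      have "L2_set (\<lambda>i. Hn / T9 * (\<bar>v $ i\<bar> + \<bar>h $ i\<bar>)) {..<n} = Hn / T9 * L2_set (\<lambda>i. \<bar>v $ i\<bar> + \<bar>h $ i\<bar>) {..<n}"
        using Hn0 T9 L2_scale[of "Hn / T9" "\<lambda>i. \<bar>v $ i\<bar> + \<bar>h $ i\<bar>" "{..<n}"] by simp
      also have "\<dots> \<le> Hn / T9 * (N + Hn)" using tri Hn0 T9 by (intro mult_left_mono) auto
      finally show ?thesis .
    qed
    also have "L2_set (\<lambda>i. Hn\<^sup>2 / (real b * T9)) {..<n} = sqrt (real n) * (Hn\<^sup>2 / (real b * T9))"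
      using T9 b0 by (simp add: L2_set_constant)
    finally have s1: "L2_set E1v {..<n} \<le> 3 * e / T9 * norm2 dmu + sqrt (real n) * (\<bar>tau\<bar> * e)
        + 2 * e / sqrt T9 * Hn + Hn / T9 * (N + Hn) + sqrt (real n) * (Hn\<^sup>2 / (real b * T9))" by simp
    have a1: "3 * e / T9 * norm2 dmu \<le> 3 * e * eps"
    proof -
      have "3 * e / T9 * norm2 dmu \<le> 3 * e / T9 * (97/100 * eps * T9)"
        using ndmu e0 T9 unfolding e_def by (intro mult_left_mono) auto
      also have "\<dots> \<le> 3 * e * eps" using T9 e0 eps0 unfolding e_def by simp
      finally show ?thesis .
    qed
    have a2: "sqrt (real n) * (\<bar>tau\<bar> * e) = e * eps / 3" unfolding abs_tau using sqn by simp
    have a3: "2 * e / sqrt T9 * Hn \<le> 2 * e * eps"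
    proof -
      have "2 * e / sqrt T9 * Hn \<le> 2 * e / sqrt T9 * (eps * sqrt T9)"
        using HnT e0 sT9 unfolding e_def by (intro mult_left_mono) auto
      also have "\<dots> = 2 * e * eps" using sT9 by simp
      finally show ?thesis .
    qed
    have a4: "Hn / T9 * (N + Hn) \<le> 2 * eps\<^sup>2"
    proof -
      have "Hn * (N + Hn) \<le> N * (N + N)" using HnN Hn0 N0 by (intro mult_mono) auto
      also have "\<dots> = 2 * N\<^sup>2" by (simp add: power2_eq_square)
      also have "\<dots> \<le> 2 * (eps\<^sup>2 * T9)" using NN by simp
      finally have "Hn * (N + Hn) \<le> 2 * eps\<^sup>2 * T9" by simp
      thus ?thesis using T9 by (simp add: divide_le_eq mult.commute mult.left_commute)
    qed
    have a5: "sqrt (real n) * (Hn\<^sup>2 / (real b * T9)) \<le> eps\<^sup>2 * sqrt (real n) / real b"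
    proof -
      have "Hn\<^sup>2 \<le> N\<^sup>2" using HnN Hn0 by (intro power_mono) auto
      hence "Hn\<^sup>2 \<le> eps\<^sup>2 * T9" using NN by linarith
      hence "Hn\<^sup>2 / (real b * T9) \<le> eps\<^sup>2 * T9 / (real b * T9)" using b0 T9 by (intro divide_right_mono) auto
      also have "\<dots> = eps\<^sup>2 / real b" using T9 by simp
      finally have "Hn\<^sup>2 / (real b * T9) \<le> eps\<^sup>2 / real b" .
      hence "sqrt (real n) * (Hn\<^sup>2 / (real b * T9)) \<le> sqrt (real n) * (eps\<^sup>2 / real b)"
        by (intro mult_left_mono) auto
      thus ?thesis by (simp add: mult.commute)
    qed
    have "0 \<le> e * eps" using e0 eps0 unfolding e_def by simp
    moreover have "0 \<le> eps\<^sup>2 * sqrt (real n) / real b" using b0 by simp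
    moreover have "0 \<le> eps\<^sup>2" by simp
    ultimately show ?thesis using s1 a1 a2 a3 a4 a5 by linarith
  qed
  have C1: "norm2 (Matrix.vec n (\<lambda>i. integral\<^sup>L M (\<lambda>\<omega>. (mu_new n eps lam t A wt mut xb sb (R \<omega>) $ i - vmul xb sb $ i
      - delta_t n eps t (vmul xb sb) $ i - delta_Phi n eps lam t mut $ i) / vmul xb sb $ i)))
      \<le> 9 * eps_mp * eps + 4 * eps\<^sup>2 + 2 * eps\<^sup>2 * sqrt (real n) / real b"
  proof -
    have "norm2 (Matrix.vec n (\<lambda>i. integral\<^sup>L M (\<lambda>\<omega>. (mu_new n eps lam t A wt mut xb sb (R \<omega>) $ i - vmul xb sb $ i
      - delta_t n eps t (vmul xb sb) $ i - delta_Phi n eps lam t mut $ i) / vmul xb sb $ i))) = L2_set E1v {..<n}"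
      unfolding norm2_vec by (rule L2_set_cong[OF refl]) (rule I1, simp)
    thus ?thesis using B1 unfolding e_def by simp
  qed
  have E1v_alt: "E1v i = (C0 i - mb i - tau * mb i - dPhi $ i) / mb i + (C1 i / mb i) * h $ i + (-1 / mb i) * EY2 i"
    if i: "i < n" for i
    unfolding E1v_def Var_def C1eq[OF i] using C0eq[OF i] dmu_i[OF i] mbp[OF i]
    by (simp add: field_simps power2_eq_square)
  have I4: "integral\<^sup>L M (\<lambda>\<omega>. (mu_new n eps lam t A wt mut xb sb (R \<omega>) $ i - vmul xb sb $ i) / vmul xb sb $ i)
     = E1v i + tau + dPhi $ i / mb i" if i: "i < n" for i
  proof -
    have "integral\<^sup>L M (\<lambda>\<omega>. (mu_new n eps lam t A wt mut xb sb (R \<omega>) $ i - vmul xb sb $ i) / vmul xb sb $ i)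
      = integral\<^sup>L M (\<lambda>\<omega>. (C0 i - mb i) / mb i + (C1 i / mb i) * Y i \<omega> + (-1 / mb i) * (Y i \<omega>)\<^sup>2)"
      by (rule Bochner_Integration.integral_cong[OF refl])
         (simp add: mun_i[OF i] mub_i'[OF i] diff_divide_distrib add_divide_distrib)
    also have "\<dots> = (C0 i - mb i) / mb i + (C1 i / mb i) * h $ i + (-1 / mb i) * EY2 i"
      by (rule Iq[OF i])
    also have "\<dots> = E1v i + tau + dPhi $ i / mb i"
      unfolding E1v_alt[OF i] using mbp[OF i] by (simp add: field_simps)
    finally show ?thesis .
  qed
  have C4: "norm2 (Matrix.vec n (\<lambda>i. integral\<^sup>L M (\<lambda>\<omega>. (mu_new n eps lam t A wt mut xb sb (R \<omega>) $ i - vmul xb sb $ i) / vmul xb sb $ i)))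
     \<le> 6 * eps + 2 * eps\<^sup>2 * sqrt (real n) / real b"
  proof -
    have "norm2 (Matrix.vec n (\<lambda>i. integral\<^sup>L M (\<lambda>\<omega>. (mu_new n eps lam t A wt mut xb sb (R \<omega>) $ i - vmul xb sb $ i) / vmul xb sb $ i)))
      = L2_set (\<lambda>i. E1v i + tau + dPhi $ i / mb i) {..<n}"
      unfolding norm2_vec by (rule L2_set_cong[OF refl]) (rule I4, simp)
    also have "\<dots> \<le> L2_set E1v {..<n} + L2_set (\<lambda>i. tau) {..<n} + L2_set (\<lambda>i. dPhi $ i / mb i) {..<n}"
      by (rule L2_sum3)
    also have "L2_set (\<lambda>i. tau) {..<n} = eps / 3" unfolding L2_set_constant abs_tau using sqn by simp
    also have "L2_set (\<lambda>i. dPhi $ i / mb i) {..<n} \<le> 5/9 * eps"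
    proof -
      have "L2_set (\<lambda>i. dPhi $ i / mb i) {..<n} \<le> L2_set (\<lambda>i. 1 / T9 * \<bar>dPhi $ i\<bar>) {..<n}"
      proof (rule L2_abs_mono)
        fix i assume "i \<in> {..<n}" hence i: "i < n" by simp
        have "\<bar>dPhi $ i / mb i\<bar> = \<bar>dPhi $ i\<bar> / mb i" using mbp[OF i] by simp
        also have "\<dots> \<le> \<bar>dPhi $ i\<bar> / T9" using mbT[OF i] T9 by (intro divide_left_mono) auto
        finally show "\<bar>dPhi $ i / mb i\<bar> \<le> 1 / T9 * \<bar>dPhi $ i\<bar>" by simp
      qed
      also have "\<dots> = 1 / T9 * norm2 dPhi"
        unfolding norm2_carrier[OF dPhiC] using T9 by (intro L2_scale_abs) auto
      also have "\<dots> = eps / 2 * tn / T9" unfolding ndPhi by simp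
      also have "\<dots> \<le> eps / 2 * t / T9" using tn_le eps0 T9 by (intro divide_right_mono mult_left_mono) auto
      also have "\<dots> = 5/9 * eps" unfolding T9_def using t0 by simp
      finally show ?thesis .
    qed
    finally have s: "norm2 (Matrix.vec n (\<lambda>i. integral\<^sup>L M (\<lambda>\<omega>. (mu_new n eps lam t A wt mut xb sb (R \<omega>) $ i - vmul xb sb $ i) / vmul xb sb $ i)))
      \<le> L2_set E1v {..<n} + eps / 3 + 5/9 * eps" by simp
    have "9 * e * eps \<le> 9 * (1/10000) * eps" using e1 eps0 unfolding e_def by (intro mult_right_mono) auto
    moreover have "4 * eps\<^sup>2 \<le> 4 * (1/10000) * eps" using eps1 eps0 by (simp add: power2_eq_square)
    ultimately show ?thesis using s B1 eps0 by linarith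
  qed
  have VarI: "integral\<^sup>L M (\<lambda>\<omega>. (Y i \<omega>)\<^sup>2) - (h $ i)\<^sup>2 = Var i" for i
    unfolding Var_def EY2_def ..
  have Vi: "integral\<^sup>L M (\<lambda>\<omega>'. (mu_new n eps lam t A wt mut xb sb (R \<omega>') $ i / vmul xb sb $ i
      - integral\<^sup>L M (\<lambda>\<omega>''. mu_new n eps lam t A wt mut xb sb (R \<omega>'') $ i / vmul xb sb $ i))\<^sup>2)
      \<le> 16 * eps_mp\<^sup>2 * eps\<^sup>2 / real b + 320 * eps ^ 4 / real b" if i: "i < n" for i
  proof -
    define c0 where "c0 = C0 i / mb i"
    define c1 where "c1 = (XS i + v $ i) / mb i"
    define c2 where "c2 = -1 / mb i"
    have fe: "mu_new n eps lam t A wt mut xb sb (R \<omega>) $ i / vmul xb sb $ i = c0 + c1 * Y i \<omega> + c2 * (Y i \<omega>)\<^sup>2"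
      if \<omega>: "\<omega> \<in> space M" for \<omega>
      unfolding mun_i[OF i \<omega>] mub_i'[OF i] c0_def c1_def c2_def C1eq[OF i]
      using mbp[OF i] by (simp add: field_simps)
    have inner: "integral\<^sup>L M (\<lambda>\<omega>''. mu_new n eps lam t A wt mut xb sb (R \<omega>'') $ i / vmul xb sb $ i)
        = integral\<^sup>L M (\<lambda>\<omega>''. c0 + c1 * Y i \<omega>'' + c2 * (Y i \<omega>'')\<^sup>2)"
      by (rule Bochner_Integration.integral_cong[OF refl]) (rule fe)
    have "integral\<^sup>L M (\<lambda>\<omega>'. (mu_new n eps lam t A wt mut xb sb (R \<omega>') $ i / vmul xb sb $ i
      - integral\<^sup>L M (\<lambda>\<omega>''. mu_new n eps lam t A wt mut xb sb (R \<omega>'') $ i / vmul xb sb $ i))\<^sup>2)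
      = integral\<^sup>L M (\<lambda>\<omega>'. (c0 + c1 * Y i \<omega>' + c2 * (Y i \<omega>')\<^sup>2
          - integral\<^sup>L M (\<lambda>\<omega>''. c0 + c1 * Y i \<omega>'' + c2 * (Y i \<omega>'')\<^sup>2))\<^sup>2)"
      unfolding inner by (rule Bochner_Integration.integral_cong[OF refl]) (simp add: fe)
    also have "\<dots> \<le> 2 * (c1 + 2 * c2 * integral\<^sup>L M (Y i))\<^sup>2 * (integral\<^sup>L M (\<lambda>\<omega>. (Y i \<omega>)\<^sup>2) - (integral\<^sup>L M (Y i))\<^sup>2)
       + 2 * c2\<^sup>2 * ((integral\<^sup>L M (\<lambda>\<omega>. (Y i \<omega>)\<^sup>2) - (integral\<^sup>L M (Y i))\<^sup>2)\<^sup>2 + 25400 * (Hn / sqrt (real b))^4 * (ln (real n))\<^sup>2)"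
    proof (rule quad_var[OF PS Ym[OF i] Yint[OF i] Y2int[OF i]])
      show "0 \<le> 25400 * (Hn / sqrt (real b))^4 * (ln (real n))\<^sup>2" using Hn0 b0 by simp
      have iz: "integrable M (\<lambda>\<omega>. (Y i \<omega> - h $ i)\<^sup>2)"
        using var_basic(1)[OF PS Yint[OF i] Y2int[OF i]] YE[OF i] by simp
      have vz: "integral\<^sup>L M (\<lambda>\<omega>. (Y i \<omega> - h $ i)\<^sup>2) \<le> (Hn / sqrt (real b))\<^sup>2"
        using var_basic(2)[OF PS Yint[OF i] Y2int[OF i]] YE[OF i] Y2E[OF i] b0
        by (simp add: power_divide)
      have "(\<integral>\<^sup>+\<omega>. ennreal ((Y i \<omega> - h $ i)^4) \<partial>M) \<le> ennreal (25400 * (Hn / sqrt (real b))^4 * (ln (real n))\<^sup>2)"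
        by (rule z4_bound[OF PS Ym[OF i] iz vz Hn0 _ n2]) (use b0 Ytail[OF i] in auto)
      thus "(\<integral>\<^sup>+\<omega>. ennreal ((Y i \<omega> - integral\<^sup>L M (Y i))^4) \<partial>M) \<le> ennreal (25400 * (Hn / sqrt (real b))^4 * (ln (real n))\<^sup>2)"
        using YE[OF i] by simp
    qed
    also have "\<dots> \<le> 16 * e\<^sup>2 * eps\<^sup>2 / real b + 320 * eps ^ 4 / real b"
      unfolding c1_def c2_def YE[OF i] VarI[of i]
    proof (rule V_scalar[OF T9 mbT[OF i] K2[OF i] _ v_le[OF i] _ Var0[OF i] _ NN b1])
      show "0 \<le> e" using e0 unfolding e_def by simp
      show "\<bar>h $ i\<bar> \<le> N" using h_le[OF i] HnN by linarith
      have "Hn\<^sup>2 \<le> N\<^sup>2" using HnN Hn0 by (intro power_mono) auto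
      thus "Var i \<le> N\<^sup>2 / real b" using VarB[OF i] b0 by (meson divide_right_mono of_nat_0_le_iff order_trans)
      show "(ln (real n))\<^sup>2 \<le> real b / 1000" using b_ge by simp
      show "0 \<le> 25400 * (Hn / sqrt (real b))^4 * (ln (real n))\<^sup>2" using Hn0 b0 by simp
      have s4: "sqrt (real b) ^ 4 = (real b)\<^sup>2"
        using power_mult[of "sqrt (real b)" 2 2] b0 by simp
      have "(Hn / sqrt (real b))^4 = (Hn\<^sup>2 / real b)\<^sup>2"
        unfolding power_divide s4 using power_mult[of Hn 2 2] by simp
      also have "\<dots> \<le> (N\<^sup>2 / real b)\<^sup>2" using \<open>Hn\<^sup>2 \<le> N\<^sup>2\<close> b0 by (intro power_mono divide_right_mono) (auto simp: HnN Hn0)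
      finally show "25400 * (Hn / sqrt (real b))^4 * (ln (real n))\<^sup>2 \<le> 25400 * (N\<^sup>2 / real b)\<^sup>2 * (ln (real n))\<^sup>2"
        by (intro mult_right_mono) auto
    qed
    finally show ?thesis unfolding e_def .
  qed
  have C2: "measure M {\<omega> \<in> space M. \<forall>i<n.
           integral\<^sup>L M (\<lambda>\<omega>'. (mu_new n eps lam t A wt mut xb sb (R \<omega>') $ i / vmul xb sb $ i
               - integral\<^sup>L M (\<lambda>\<omega>''. mu_new n eps lam t A wt mut xb sb (R \<omega>'') $ i / vmul xb sb $ i))\<^sup>2)
           \<le> 16 * eps_mp\<^sup>2 * eps\<^sup>2 / real b + 320 * eps ^ 4 / real b}
         \<ge> 1 - 1 / real n powr 1"
  proof -
    have "{\<omega> \<in> space M. \<forall>i<n.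
           integral\<^sup>L M (\<lambda>\<omega>'. (mu_new n eps lam t A wt mut xb sb (R \<omega>') $ i / vmul xb sb $ i
               - integral\<^sup>L M (\<lambda>\<omega>''. mu_new n eps lam t A wt mut xb sb (R \<omega>'') $ i / vmul xb sb $ i))\<^sup>2)
           \<le> 16 * eps_mp\<^sup>2 * eps\<^sup>2 / real b + 320 * eps ^ 4 / real b} = space M"
      using Vi by auto
    moreover have "0 \<le> 1 / real n powr 1" by simp
    ultimately show ?thesis using prob_space by simp
  qed
  define \<delta> where "\<delta> = 1 / (real n)\<^sup>2"
  have d0: "0 < \<delta>" unfolding \<delta>_def using nr by simp
  have d1: "\<delta> < 1"
  proof -
    have "1 < (real n)\<^sup>2" using one_less_power[of "real n" 2] nr by simp
    thus ?thesis unfolding \<delta>_def by (simp add: divide_less_eq)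
  qed
  define thr where "thr = Hn * ln (real n / \<delta>) / sqrt (real b)"
  have thr_le: "thr \<le> 1/10 * Hn"
  proof -
    have "ln (real n / \<delta>) = ln ((real n)^3)" unfolding \<delta>_def using nr
      by (simp add: power2_eq_square power3_eq_cube)
    also have "\<dots> = 3 * ln (real n)" using nr by (simp add: ln_realpow)
    finally have l3: "ln (real n / \<delta>) = 3 * ln (real n)" .
    have Lp: "0 < ln (real n)" using L23 by linarith
    have "sqrt (1000 * (ln (real n))\<^sup>2) \<le> sqrt (real b)" using b_ge by (rule real_sqrt_le_mono)
    moreover have "sqrt (1000 * (ln (real n))\<^sup>2) = sqrt 1000 * ln (real n)" using Lp by (simp add: real_sqrt_mult)
    moreover have "30 \<le> sqrt (1000::real)"
    proof -
      have a: "sqrt (900::real) \<le> sqrt 1000" by (rule real_sqrt_le_mono) simp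
      have b: "sqrt (900::real) = 30"
      proof -
        have "(900::real) = 30\<^sup>2" by simp
        thus ?thesis by (metis real_sqrt_abs abs_numeral)
      qed
      show ?thesis using a b by linarith
    qed
    moreover have "30 * ln (real n) \<le> sqrt 1000 * ln (real n)"
      using \<open>30 \<le> sqrt (1000::real)\<close> Lp by (intro mult_right_mono) auto
    ultimately have sb30: "30 * ln (real n) \<le> sqrt (real b)" by linarith
    have "thr = Hn * (3 * ln (real n)) / sqrt (real b)" unfolding thr_def l3 ..
    also have "\<dots> \<le> Hn * (3 * ln (real n)) / (30 * ln (real n))"
      using sb30 Hn0 Lp b0 by (intro divide_left_mono) auto
    also have "\<dots> = 1/10 * Hn" using Lp by simp
    finally show ?thesis .
  qed
  define Bad where "Bad = (\<lambda>i. {\<omega> \<in> space M. \<bar>Y i \<omega> - h $ i\<bar> > thr})"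
  have Bad_sets: "Bad i \<in> sets M" if i: "i < n" for i
  proof -
    note [measurable] = Ym[OF i]
    show ?thesis unfolding Bad_def by measurable
  qed
  have Bad_meas: "measure M (Bad i) \<le> \<delta>" if i: "i < n" for i
    unfolding Bad_def thr_def using Ytail[OF i d0 d1] .
  define Good where "Good = {\<omega> \<in> space M. \<forall>i<n. \<bar>(mu_new n eps lam t A wt mut xb sb (R \<omega>) $ i - vmul xb sb $ i) / vmul xb sb $ i\<bar> \<le> 6 * eps}"
  have Gsets: "Good \<in> sets M"
  proof -
    have "Good = space M \<inter> (\<Inter>i\<in>{..<n}. {\<omega> \<in> space M. \<bar>(C0 i + C1 i * Y i \<omega> + (-1) * (Y i \<omega>)\<^sup>2 - mb i) / mb i\<bar> \<le> 6 * eps})"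
      unfolding Good_def using mun_i mub_i' by auto
    moreover have "{\<omega> \<in> space M. \<bar>(C0 i + C1 i * Y i \<omega> + (-1) * (Y i \<omega>)\<^sup>2 - mb i) / mb i\<bar> \<le> 6 * eps} \<in> sets M"
      if i: "i < n" for i
    proof -
      note [measurable] = Ym[OF i]
      show ?thesis by measurable
    qed
    ultimately show ?thesis using n2 by (auto intro!: sets.Int sets.finite_INT)
  qed
  have sub: "space M - (\<Union>i\<in>{..<n}. Bad i) \<subseteq> Good"
  proof
    fix \<omega> assume \<omega>: "\<omega> \<in> space M - (\<Union>i\<in>{..<n}. Bad i)"
    hence w: "\<omega> \<in> space M" by simp
    have "\<bar>(mu_new n eps lam t A wt mut xb sb (R \<omega>) $ i - vmul xb sb $ i) / vmul xb sb $ i\<bar> \<le> 6 * eps"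
      if i: "i < n" for i
    proof -
      have "\<omega> \<notin> Bad i" using \<omega> i by auto
      hence yb: "\<bar>Y i \<omega> - h $ i\<bar> \<le> thr" unfolding Bad_def using w by auto
      have yN: "\<bar>Y i \<omega>\<bar> \<le> 11/10 * N"
        using yb thr_le h_le[OF i] HnN abs_triangle_ineq2[of "Y i \<omega>" "h $ i"] by linarith
      have "(mu_new n eps lam t A wt mut xb sb (R \<omega>) $ i - vmul xb sb $ i) / vmul xb sb $ i
          = (kap i * dmu $ i + XS i * Y i \<omega> + (v $ i - Y i \<omega>) * Y i \<omega>) / mb i"
        unfolding mun_i[OF i w] mub_i'[OF i] C1eq[OF i] using C0eq[OF i]
        by (simp add: algebra_simps power2_eq_square)
      also have "\<bar>\<dots>\<bar> \<le> 6 * eps"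
      proof (rule C3_scalar[OF T9 mbT[OF i] K1[OF i] _ _ K2[OF i] v_le[OF i] yN NN eps0 eps1])
        show "e < 1/10000" using e1 unfolding e_def .
        show "\<bar>dmu $ i\<bar> \<le> 97/100 * eps * T9" using dmu_le[OF i] ndmu by linarith
      qed
      finally show ?thesis .
    qed
    thus "\<omega> \<in> Good" unfolding Good_def using w by auto
  qed
  have C3: "measure M Good \<ge> 1 - 1 / real n powr 1"
  proof -
    have Ub: "(\<Union>i\<in>{..<n}. Bad i) \<in> sets M" using Bad_sets by auto
    have "measure M (\<Union>i\<in>{..<n}. Bad i) \<le> (\<Sum>i\<in>{..<n}. measure M (Bad i))"
      by (rule finite_measure_subadditive_finite) (use Bad_sets in auto)
    also have "\<dots> \<le> (\<Sum>i\<in>{..<n}. \<delta>)" using Bad_meas by (intro sum_mono) auto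
    also have "\<dots> = real n * \<delta>" by simp
    also have "\<dots> = 1 / real n" unfolding \<delta>_def using nr by (simp add: power2_eq_square)
    finally have mb: "measure M (\<Union>i\<in>{..<n}. Bad i) \<le> 1 / real n" .
    have "1 - 1 / real n \<le> 1 - measure M (\<Union>i\<in>{..<n}. Bad i)" using mb by simp
    also have "\<dots> = measure M (space M - (\<Union>i\<in>{..<n}. Bad i))" using prob_compl[OF Ub] by simp
    also have "\<dots> \<le> measure M Good" using sub Gsets by (intro finite_measure_mono) auto
    finally show ?thesis using nr by simp
  qed
  show ?thesis unfolding Let_def using C1 C2 C3 C4 unfolding Good_def by auto
qed

theorem lemmaB21:
  "\<exists>c::real. c > 0 \<and>
   (\<forall>(n::nat) (d::nat) (b::nat) (A::real mat) (eps::real) (eps_mp::real) (lam::real) (t::real)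
      (xb::real vec) (sb::real vec) (wt::real vec) (mut::real vec)
      (M::'w measure) (R::'w \<Rightarrow> real mat).
    n \<ge> 2 \<and> d \<le> n \<and> full_row_rank d n A \<and>
    0 < eps \<and> eps < 1/10000 \<and> 0 < eps_mp \<and> eps_mp < 1/10000 \<and>
    lam > ln (real n) \<and> real b \<ge> 1000 * (ln (real n))\<^sup>2 \<and> t > 0 \<and>
    xb \<in> carrier_vec n \<and> sb \<in> carrier_vec n \<and> pos_vec xb \<and> pos_vec sb \<and>
    wt \<in> carrier_vec n \<and> mut \<in> carrier_vec n \<and> pos_vec wt \<and> pos_vec mut \<and>
    approx_vec mut eps_mp (vmul xb sb) \<and> approx_vec wt eps_mp (vdivide xb sb) \<and>
    approx_scal (vmul xb sb) (1/10) t \<and>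
    gradPhi lam (Matrix.vec n (\<lambda>i. mut $ i / t - 1)) \<noteq> 0\<^sub>v n \<and>
    sketch_hyps M b n R
    \<longrightarrow>
    (let mub = vmul xb sb;
         mun = (\<lambda>\<omega>. mu_new n eps lam t A wt mut xb sb (R \<omega>));
         dtb = delta_t n eps t mub;
         dPhi = delta_Phi n eps lam t mut
     in
       norm2 (Matrix.vec n (\<lambda>i. integral\<^sup>L M (\<lambda>\<omega>.
           (mun \<omega> $ i - mub $ i - dtb $ i - dPhi $ i) / mub $ i)))
         \<le> 9 * eps_mp * eps + 4 * eps\<^sup>2 + 2 * eps\<^sup>2 * sqrt (real n) / real b
     \<and> measure M {\<omega> \<in> space M. \<forall>i<n.
           integral\<^sup>L M (\<lambda>\<omega>'. (mun \<omega>' $ i / mub $ i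
               - integral\<^sup>L M (\<lambda>\<omega>''. mun \<omega>'' $ i / mub $ i))\<^sup>2)
           \<le> 16 * eps_mp\<^sup>2 * eps\<^sup>2 / real b + 320 * eps ^ 4 / real b}
         \<ge> 1 - 1 / real n powr c
     \<and> measure M {\<omega> \<in> space M. \<forall>i<n. \<bar>(mun \<omega> $ i - mub $ i) / mub $ i\<bar> \<le> 6 * eps}
         \<ge> 1 - 1 / real n powr c
     \<and> norm2 (Matrix.vec n (\<lambda>i. integral\<^sup>L M (\<lambda>\<omega>. (mun \<omega> $ i - mub $ i) / mub $ i)))
         \<le> 6 * eps + 2 * eps\<^sup>2 * sqrt (real n) / real b))"
  apply (rule exI[of _ 1])
  apply (intro conjI allI impI)
   apply simp
  apply (erule main_lemma)
  done

end
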